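(* Let $n\ge 1$, $d\ge 1$, and $\eta>0$. Consider the signed HJMR model: $n$ agents with opinions $\mathbf{X}_t^{(i)}\in\mathbb{S}^{d-1}$ updated by $\mathbf{X}_{t+1}^{(i)}=P_{\mathbb{S}^{d-1}}\big(\mathbf{X}_t^{(i)}+\eta\,\mathrm{sgn}(\langle\mathbf{X}_t^{(i)},\xi_t\rangle)\,\xi_t\big)$, $i=1,\ldots,n$, where $\xi_0,\xi_1,\ldots$ are i.i.d. from a distribution $\mathcal{D}$ on $\mathbb{S}^{d-1}$ for which there exist constants $C,C'>0$ with $C\mu(A)\le\Pr(\xi_t\in A)\le C'\mu(A)$ for every measurable $A\subseteq\mathbb{S}^{d-1}$, $\mu$ being the uniform (Haar) probability measure on $\mathbb{S}^{d-1}$. Then for every starting configuration $\mathbf{X}_0\in(\mathbb{S}^{d-1})^n$, almost surely $\rho(\mathbf{X}_t,P)\to 0$ (i.e., the system strongly polarizes).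
   Context: $\mathbb{S}^{d-1}$ is the unit sphere in $\mathbb{R}^d$, $P_{\mathbb{S}^{d-1}}(\mathbf{x})=\mathbf{x}/\|\mathbf{x}\|_2$, and $\mathrm{sgn}(0)=0$. The polarized set is $P=\{(\sigma_1\mathbf{x},\ldots,\sigma_n\mathbf{x}):\mathbf{x}\in\mathbb{S}^{d-1},\ \bm{\sigma}\in\{-1,1\}^n\}\subseteq(\mathbb{S}^{d-1})^n$, and $\rho(\mathbf{z},P)=\inf_{\mathbf{y}\in P}\|\mathbf{z}-\mathbf{y}\|_2$ (Euclidean distance in $(\mathbb{R}^d)^n$). *)

theory Defs
  imports "HOL-Probability.Probability"
begin

text \<open>Uniform (Haar) probability measure on the unit sphere S^(d-1) of real^'d,
  realised as the normalised cone measure: mu(A) = Leb{r x : x in A, 0 < r <= 1} / Leb(ball 0 1).\<close>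
definition sphere_mu :: "(real^'d) set \<Rightarrow> real" where
  "sphere_mu A = measure lebesgue {r *\<^sub>R x | r x. x \<in> A \<and> 0 < r \<and> r \<le> 1}
                 / measure lebesgue (ball (0::real^'d) 1)"

definition proj_sphere :: "real^'d \<Rightarrow> real^'d" where
  "proj_sphere y = (1 / norm y) *\<^sub>R y"

definition hjmr_step :: "real \<Rightarrow> real^'d \<Rightarrow> real^'d \<Rightarrow> real^'d" where
  "hjmr_step \<eta> xi x = proj_sphere (x + (\<eta> * sgn (x \<bullet> xi)) *\<^sub>R xi)"

fun hjmr_traj :: "real \<Rightarrow> real^'d^'n \<Rightarrow> (nat \<Rightarrow> real^'d) \<Rightarrow> nat \<Rightarrow> real^'d^'n" where
  "hjmr_traj \<eta> X0 xis 0 = X0"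
| "hjmr_traj \<eta> X0 xis (Suc t) = (\<chi> i. hjmr_step \<eta> (xis t) (hjmr_traj \<eta> X0 xis t $ i))"

definition polarized :: "(real^'d^'n) set" where
  "polarized = {(\<chi> i. \<sigma> i *\<^sub>R x) | x \<sigma>. x \<in> sphere 0 1 \<and> (\<forall>i. \<sigma> i \<in> {-1, 1})}"

end

theory Submission
  imports Defs
begin

lemma norm_diff_sq:
  fixes x y :: "'a::real_inner"
  shows "norm (x - y)^2 = norm x^2 + norm y^2 - 2 * (x \<bullet> y)"
  by (simp add: power2_norm_eq_inner inner_diff_left inner_diff_right inner_commute)

lemma normalize_diff_le:
  fixes a b :: "'a::real_inner"
  assumes "m > 0" "norm a \<ge> m" "norm b \<ge> m"
  shows "norm ((1/norm a) *\<^sub>R a - (1/norm b) *\<^sub>R b) \<le> norm (a - b) / m"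
proof -
  have na: "norm a > 0" "norm b > 0" using assms by linarith+
  have e1: "norm ((1/norm a) *\<^sub>R a - (1/norm b) *\<^sub>R b)^2 = 2 - 2 * (a \<bullet> b) / (norm a * norm b)"
  proof -
    have "norm ((1/norm a) *\<^sub>R a - (1/norm b) *\<^sub>R b)^2 = norm ((1/norm a) *\<^sub>R a)^2 + norm ((1/norm b) *\<^sub>R b)^2 - 2 * (((1/norm a) *\<^sub>R a) \<bullet> ((1/norm b) *\<^sub>R b))"
      by (rule norm_diff_sq)
    also have "\<dots> = 2 - 2 * (a \<bullet> b) / (norm a * norm b)" using na by (simp add: power_divide)
    finally show ?thesis .
  qed
  have s2: "norm a^2 + norm b^2 \<ge> 2 * (norm a * norm b)"
    using sum_squares_bound[of "norm a" "norm b"] by (simp add: power2_eq_square)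
  have ab: "2 * (norm a * norm b) - 2 * (a \<bullet> b) \<le> norm (a-b)^2"
    using norm_diff_sq[of a b] s2 by linarith
  have mm: "m^2 \<le> norm a * norm b" using mult_mono[of m "norm a" m "norm b"] assms by (simp add: power2_eq_square)
  have "2 - 2 * (a \<bullet> b) / (norm a * norm b) = (2 * (norm a * norm b) - 2 * (a \<bullet> b)) / (norm a * norm b)"
    using na by (simp add: diff_divide_distrib)
  also have "\<dots> \<le> norm (a-b)^2 / (norm a * norm b)"
    using na ab by (intro divide_right_mono) simp_all
  also have "\<dots> \<le> norm (a - b)^2 / m^2"
    using assms na mm by (intro divide_left_mono) simp_all
  also have "\<dots> = (norm (a-b) / m)^2" by (simp add: power_divide)
  finally have "norm ((1/norm a) *\<^sub>R a - (1/norm b) *\<^sub>R b)^2 \<le> (norm (a-b) / m)^2" using e1 by simp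
  thus ?thesis
    by (rule power2_le_imp_le) (use assms in simp)
qed


definition Dd :: "real^'d \<Rightarrow> real^'d \<Rightarrow> real" where
  "Dd x y = min (norm (x - y)) (norm (x + y))"

definition stepv :: "real \<Rightarrow> real^'d \<Rightarrow> real^'d^'n \<Rightarrow> real^'d^'n" where
  "stepv \<eta> z X = (\<chi> i. hjmr_step \<eta> z (X $ i))"

definition Sf :: "'n \<Rightarrow> real^'d^'n::finite \<Rightarrow> real" where
  "Sf i0 X = (\<Sum>j\<in>UNIV. Dd (X $ i0) (X $ j))"

lemma traj_Suc: "hjmr_traj \<eta> X0 xis (Suc t) = stepv \<eta> (xis t) (hjmr_traj \<eta> X0 xis t)"
  by (simp add: stepv_def)

lemma norm_add_sq:
  fixes x y :: "'a::real_inner"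
  shows "norm (x + y)^2 = norm x^2 + norm y^2 + 2 * (x \<bullet> y)"
  by (simp add: power2_norm_eq_inner inner_add_left inner_add_right inner_commute)

lemma norm_add_scaled_sq:
  fixes x y :: "'a::real_inner"
  shows "norm (x + c *\<^sub>R y)^2 = norm x^2 + c^2 * norm y^2 + 2 * c * (x \<bullet> y)"
  unfolding norm_add_sq by (simp add: power_mult_distrib)

lemma step_arg_norm:
  fixes x z :: "real^'d"
  assumes "norm x = 1" "\<eta> \<ge> 0"
  shows "norm (x + (\<eta> * sgn (x \<bullet> z)) *\<^sub>R z)^2 = 1 + 2 * \<eta> * \<bar>x \<bullet> z\<bar> + (\<eta> * sgn (x \<bullet> z))^2 * norm z ^2"
proof -
  have "norm (x + (\<eta> * sgn (x \<bullet> z)) *\<^sub>R z)^2 = norm x^2 + 2 * ((\<eta> * sgn (x \<bullet> z)) * (x \<bullet> z)) + (\<eta> * sgn (x \<bullet> z))^2 * norm z ^2"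
    unfolding norm_add_scaled_sq by (simp add: algebra_simps)
  moreover have "sgn (x \<bullet> z) * (x \<bullet> z) = \<bar>x \<bullet> z\<bar>" by (simp add: sgn_if)
  ultimately show ?thesis using assms by (simp add: algebra_simps)
qed

lemma step_arg_ge1:
  fixes x z :: "real^'d"
  assumes "norm x = 1" "\<eta> \<ge> 0"
  shows "norm (x + (\<eta> * sgn (x \<bullet> z)) *\<^sub>R z) \<ge> 1"
proof -
  have "norm (x + (\<eta> * sgn (x \<bullet> z)) *\<^sub>R z)^2 \<ge> 1"
    unfolding step_arg_norm[OF assms] using assms by (simp add: zero_le_mult_iff)
  thus ?thesis using power2_le_imp_le[of 1 "norm (x + (\<eta> * sgn (x \<bullet> z)) *\<^sub>R z)"] by simp
qed

lemma step_norm: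
  fixes x z :: "real^'d"
  assumes "norm x = 1" "\<eta> \<ge> 0"
  shows "norm (hjmr_step \<eta> z x) = 1"
proof -
  have "norm (x + (\<eta> * sgn (x \<bullet> z)) *\<^sub>R z) \<noteq> 0" using step_arg_ge1[OF assms, of z] by linarith
  thus ?thesis unfolding hjmr_step_def proj_sphere_def by simp
qed

lemma step_odd:
  fixes x z :: "real^'d"
  shows "hjmr_step \<eta> z (- x) = - hjmr_step \<eta> z x"
proof -
  have "- x + (\<eta> * sgn ((- x) \<bullet> z)) *\<^sub>R z = - (x + (\<eta> * sgn (x \<bullet> z)) *\<^sub>R z)"
    by (simp add: sgn_minus algebra_simps)
  thus ?thesis unfolding hjmr_step_def proj_sphere_def by (simp only:) (simp only: norm_minus_cancel scaleR_minus_right)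
qed

definition lam :: "real \<Rightarrow> real" where "lam \<eta> = 1 / sqrt (1 + \<eta>^2)"

lemma lam_pos: "lam \<eta> > 0" unfolding lam_def by (simp add: add_pos_nonneg)
lemma lam_lt1: "\<eta> > 0 \<Longrightarrow> lam \<eta> < 1" unfolding lam_def by (simp add: add_pos_nonneg)

lemma step_pos_eq:
  fixes x z :: "real^'d"
  assumes "x \<bullet> z > 0"
  shows "hjmr_step \<eta> z x = (1 / norm (x + \<eta> *\<^sub>R z)) *\<^sub>R (x + \<eta> *\<^sub>R z)"
  using assms unfolding hjmr_step_def proj_sphere_def by simp

lemma norm_pos_arg:
  fixes x z :: "real^'d"
  assumes "norm x = 1" "norm z = 1" "x \<bullet> z \<ge> 0" "\<eta> \<ge> 0"
  shows "norm (x + \<eta> *\<^sub>R z) \<ge> sqrt (1 + \<eta>^2)"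
proof -
  have "norm (x + \<eta> *\<^sub>R z)^2 = 1 + 2 * \<eta> * (x \<bullet> z) + \<eta>^2"
    using assms unfolding norm_add_scaled_sq by simp
  also have "\<dots> \<ge> 1 + \<eta>^2" using assms by simp
  finally show ?thesis by (simp add: real_le_lsqrt)
qed

lemma step_contract:
  fixes x y z :: "real^'d"
  assumes "norm x = 1" "norm y = 1" "norm z = 1" "x \<bullet> z > 0" "y \<bullet> z > 0" "\<eta> \<ge> 0"
  shows "norm (hjmr_step \<eta> z x - hjmr_step \<eta> z y) \<le> lam \<eta> * norm (x - y)"
proof -
  have m: "sqrt (1 + \<eta>^2) > 0" by (simp add: add_pos_nonneg)
  have "norm (hjmr_step \<eta> z x - hjmr_step \<eta> z y) \<le> norm ((x + \<eta> *\<^sub>R z) - (y + \<eta> *\<^sub>R z)) / sqrt (1 + \<eta>^2)"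
    unfolding step_pos_eq[OF assms(4)] step_pos_eq[OF assms(5)]
    by (rule normalize_diff_le[OF m]) (use assms norm_pos_arg[of x z \<eta>] norm_pos_arg[of y z \<eta>] in simp_all)
  thus ?thesis by (simp add: lam_def)
qed

lemma step_contract_gen:
  fixes x w z :: "real^'d"
  assumes "norm x = 1" "norm w = 1" "norm z = 1" "\<bar>x \<bullet> z\<bar> > norm (x - w)" "\<eta> \<ge> 0"
  shows "norm (hjmr_step \<eta> z x - hjmr_step \<eta> z w) \<le> lam \<eta> * norm (x - w)"
proof -
  have "\<bar>x \<bullet> z - w \<bullet> z\<bar> \<le> norm (x - w)"
    using Cauchy_Schwarz_ineq2[of "x - w" z] assms(3) by (simp add: inner_diff_left)
  hence d: "\<bar>x \<bullet> z - w \<bullet> z\<bar> < \<bar>x \<bullet> z\<bar>" using assms(4) by linarith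
  show ?thesis
  proof (cases "x \<bullet> z > 0")
    case True
    hence "w \<bullet> z > 0" using d by linarith
    thus ?thesis using step_contract[OF assms(1,2,3) True _ assms(5)] by simp
  next
    case False
    hence "x \<bullet> z < 0" using assms(4) by (cases "x \<bullet> z = 0") auto
    hence a: "(-x) \<bullet> z > 0" "(-w) \<bullet> z > 0" using d by auto
    have "norm (hjmr_step \<eta> z (-x) - hjmr_step \<eta> z (-w)) \<le> lam \<eta> * norm (-x - -w)"
      using step_contract[of "-x" "-w" z \<eta>] assms a by simp
    thus ?thesis unfolding step_odd by (simp add: norm_minus_commute)
  qed
qed

lemma Dd_nonneg: "Dd x y \<ge> 0" by (simp add: Dd_def)

lemma Dd_contract:
  fixes x y z :: "real^'d"
  assumes "norm x = 1" "norm y = 1" "norm z = 1" "\<bar>x \<bullet> z\<bar> > Dd x y" "\<eta> \<ge> 0"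
  shows "Dd (hjmr_step \<eta> z x) (hjmr_step \<eta> z y) \<le> lam \<eta> * Dd x y"
proof (cases "norm (x - y) \<le> norm (x + y)")
  case True
  hence e: "Dd x y = norm (x - y)" by (simp add: Dd_def)
  have "Dd (hjmr_step \<eta> z x) (hjmr_step \<eta> z y) \<le> norm (hjmr_step \<eta> z x - hjmr_step \<eta> z y)" by (simp add: Dd_def)
  also have "\<dots> \<le> lam \<eta> * norm (x - y)" using step_contract_gen[of x y z \<eta>] assms e by simp
  finally show ?thesis using e by simp
next
  case False
  hence e: "Dd x y = norm (x - (-y))" by (simp add: Dd_def)
  have "Dd (hjmr_step \<eta> z x) (hjmr_step \<eta> z y) \<le> norm (hjmr_step \<eta> z x - hjmr_step \<eta> z (-y))"
    unfolding step_odd by (simp add: Dd_def)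
  also have "\<dots> \<le> lam \<eta> * norm (x - (-y))" using step_contract_gen[of x "-y" z \<eta>] assms e by simp
  finally show ?thesis using e by simp
qed

lemma Dd_le_Sf: "Dd (X $ i0) (X $ j) \<le> Sf i0 X"
  unfolding Sf_def by (rule member_le_sum) (auto simp: Dd_nonneg)

lemma Sf_nonneg: "Sf i0 X \<ge> 0"
  unfolding Sf_def by (rule sum_nonneg) (simp add: Dd_nonneg)

lemma Sf_contract:
  fixes X :: "real^'d^'n::finite" and z :: "real^'d"
  assumes "\<And>i. norm (X $ i) = 1" "norm z = 1" "\<bar>X $ i0 \<bullet> z\<bar> > Sf i0 X" "\<eta> \<ge> 0"
  shows "Sf i0 (stepv \<eta> z X) \<le> lam \<eta> * Sf i0 X"
  unfolding Sf_def sum_distrib_left stepv_def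
proof (rule sum_mono)
  fix j
  have "\<bar>X $ i0 \<bullet> z\<bar> > Dd (X $ i0) (X $ j)" using Dd_le_Sf[of X i0 j] assms(3) by linarith
  thus "Dd ((\<chi> i. hjmr_step \<eta> z (X $ i)) $ i0) ((\<chi> i. hjmr_step \<eta> z (X $ i)) $ j) \<le> lam \<eta> * Dd (X $ i0) (X $ j)"
    using Dd_contract[OF assms(1,1,2) _ assms(4)] by simp
qed

lemma stepv_norm:
  assumes "\<And>i. norm (X $ i) = 1" "\<eta> \<ge> 0"
  shows "norm (stepv \<eta> z X $ i) = 1"
  using step_norm[OF assms(1)[of i] assms(2)] by (simp add: stepv_def)

lemma traj_norm:
  assumes "\<And>i. norm (X0 $ i) = 1" "\<eta> \<ge> 0"
  shows "norm (hjmr_traj \<eta> X0 xis t $ i) = 1"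
  using assms by (induction t arbitrary: i) (simp_all add: step_norm)

lemma infdist_le_Sf:
  fixes X :: "real^'d^'n::finite"
  assumes "\<And>i. norm (X $ i) = 1"
  shows "infdist X polarized \<le> Sf i0 X"
proof -
  define \<sigma> where "\<sigma> j = (if norm (X $ i0 - X $ j) \<le> norm (X $ i0 + X $ j) then 1 else (-1::real))" for j
  define Y where "Y = (\<chi> j. \<sigma> j *\<^sub>R X $ i0)"
  have "Y \<in> polarized" unfolding polarized_def Y_def
    by (rule CollectI, rule exI[of _ "X $ i0"], rule exI[of _ \<sigma>]) (use assms[of i0] in \<open>simp add: \<sigma>_def\<close>)
  hence "infdist X polarized \<le> dist X Y" by (rule infdist_le)
  also have "\<dots> = L2_set (\<lambda>j. norm (X $ j - Y $ j)) UNIV" by (simp add: dist_norm norm_vec_def)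
  also have "\<dots> \<le> (\<Sum>j\<in>UNIV. norm (X $ j - Y $ j))" by (rule L2_set_le_sum) simp
  also have "\<dots> = Sf i0 X" unfolding Sf_def
  proof (rule sum.cong)
    fix j
    show "norm (X $ j - Y $ j) = Dd (X $ i0) (X $ j)"
      unfolding Y_def Dd_def \<sigma>_def by (auto simp: norm_minus_commute add.commute)
  qed simp
  finally show ?thesis .
qed


lemma first_step_inner:
  fixes x p :: "real^'d"
  assumes "norm x = 1" "norm p = 1" "x \<bullet> p \<noteq> 0" "\<eta> > 0"
  shows "\<bar>hjmr_step \<eta> p x \<bullet> p\<bar> \<ge> \<eta> / (1 + \<eta>)"
proof -
  define s where "s = sgn (x \<bullet> p)"
  define v where "v = x + (\<eta> * s) *\<^sub>R p"
  have s2: "\<bar>s\<bar> = 1" using assms(3) by (simp add: s_def sgn_if)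
  have nv: "norm v \<le> 1 + \<eta>"
  proof -
    have "norm v \<le> norm x + norm ((\<eta> * s) *\<^sub>R p)" unfolding v_def by (rule norm_triangle_ineq)
    also have "\<dots> = 1 + \<eta>" using assms s2 by (simp add: abs_mult)
    finally show ?thesis .
  qed
  have nv1: "norm v \<ge> 1" unfolding v_def s_def by (rule step_arg_ge1) (use assms in auto)
  have vp: "\<bar>v \<bullet> p\<bar> = \<bar>x \<bullet> p\<bar> + \<eta>"
  proof -
    have "v \<bullet> p = x \<bullet> p + \<eta> * s" unfolding v_def using assms(2) by (simp add: inner_add_left power2_norm_eq_inner[symmetric] dot_square_norm)
    thus ?thesis using assms(3,4) unfolding s_def by (auto simp: sgn_if)
  qed
  have "hjmr_step \<eta> p x = (1 / norm v) *\<^sub>R v" unfolding hjmr_step_def proj_sphere_def v_def s_def ..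
  hence "\<bar>hjmr_step \<eta> p x \<bullet> p\<bar> = (\<bar>x \<bullet> p\<bar> + \<eta>) / norm v" using vp nv1 by (simp add: abs_mult)
  also have "\<dots> \<ge> \<eta> / (1 + \<eta>)"
  proof -
    have "(\<bar>x \<bullet> p\<bar> + \<eta>) / norm v \<ge> \<eta> / norm v" using nv1 by (simp add: divide_right_mono)
    moreover have "\<eta> / norm v \<ge> \<eta> / (1 + \<eta>)" 
    proof -
      have "0 < 1 + \<eta>" "0 < norm v" using nv1 assms(4) by linarith+
      hence "0 < (1 + \<eta>) * norm v" by (rule mult_pos_pos)
      thus ?thesis using nv assms(4) by (intro divide_left_mono) simp_all
    qed
    ultimately show ?thesis by linarith
  qed
  finally show ?thesis .
qed

lemma step_toward:
  fixes u p z :: "real^'d"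
  assumes "norm u = 1" "norm p = 1" "norm z = 1" "norm (z - p) < \<delta>" "\<delta> \<le> 1/2"
    and "u \<bullet> p \<ge> \<delta>" "\<eta> > 0"
  shows "norm (hjmr_step \<eta> z u - p) \<le> lam \<eta> * norm (u - p) + \<delta>"
proof -
  have czp: "\<bar>u \<bullet> (z - p)\<bar> \<le> norm (z - p)" using Cauchy_Schwarz_ineq2[of u "z - p"] assms(1) by simp
  have uz: "u \<bullet> z > 0" using czp assms(4,6) by (simp add: inner_diff_right)
  have cpp: "\<bar>p \<bullet> (z - p)\<bar> \<le> norm (z - p)" using Cauchy_Schwarz_ineq2[of p "z - p"] assms(2) by simp
  have pp: "p \<bullet> p = 1" using assms(2) by (simp add: dot_square_norm)
  have pz: "p \<bullet> z > 0" using cpp assms(4,5) pp by (simp add: inner_diff_right)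
  have m: "sqrt (1 + \<eta>^2) > 0" by (simp add: add_pos_nonneg)
  have "norm (hjmr_step \<eta> z u - p) \<le> norm (hjmr_step \<eta> z u - hjmr_step \<eta> z p) + norm (hjmr_step \<eta> z p - p)"
  proof -
    have "hjmr_step \<eta> z u - p = (hjmr_step \<eta> z u - hjmr_step \<eta> z p) + (hjmr_step \<eta> z p - p)" by simp
    thus ?thesis by (metis norm_triangle_ineq)
  qed
  also have "norm (hjmr_step \<eta> z u - hjmr_step \<eta> z p) \<le> lam \<eta> * norm (u - p)"
    using step_contract[OF assms(1,2,3) uz pz] assms(7) by simp
  also have "norm (hjmr_step \<eta> z p - p) \<le> \<delta>"
  proof -
    have pe: "p = (1 / norm (p + \<eta> *\<^sub>R p)) *\<^sub>R (p + \<eta> *\<^sub>R p)"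
    proof -
      have "p + \<eta> *\<^sub>R p = (1 + \<eta>) *\<^sub>R p" by (simp add: algebra_simps)
      thus ?thesis using assms(2,7) by simp
    qed
    have n1: "norm (p + \<eta> *\<^sub>R p) \<ge> sqrt (1 + \<eta>^2)" by (rule norm_pos_arg) (use assms pp in simp_all)
    have n2: "norm (p + \<eta> *\<^sub>R z) \<ge> sqrt (1 + \<eta>^2)" by (rule norm_pos_arg) (use assms pz in simp_all)
    have "norm (hjmr_step \<eta> z p - p) = norm ((1 / norm (p + \<eta> *\<^sub>R z)) *\<^sub>R (p + \<eta> *\<^sub>R z) - (1 / norm (p + \<eta> *\<^sub>R p)) *\<^sub>R (p + \<eta> *\<^sub>R p))"
      unfolding step_pos_eq[OF pz] using pe by metis
    also have "\<dots> \<le> norm ((p + \<eta> *\<^sub>R z) - (p + \<eta> *\<^sub>R p)) / sqrt (1 + \<eta>^2)"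
      by (rule normalize_diff_le[OF m n2 n1])
    also have "\<dots> = \<eta> * norm (z - p) / sqrt (1 + \<eta>^2)"
      using assms(7) by (simp add: scaleR_diff_right[symmetric] del: scaleR_diff_right)
    also have "\<dots> \<le> norm (z - p)"
    proof -
      have "\<eta> \<le> sqrt (1 + \<eta>^2)" by (rule real_le_rsqrt) simp
      hence "\<eta> / sqrt (1 + \<eta>^2) \<le> 1" using m by simp
      thus ?thesis using mult_right_mono[of "\<eta> / sqrt (1 + \<eta>^2)" 1 "norm (z - p)"] by simp
    qed
    finally show ?thesis using assms(4) by linarith
  qed
  finally show ?thesis by simp
qed

lemma unit_inner_eq:
  fixes u p :: "'a::real_inner"
  assumes "norm u = 1" "norm p = 1"
  shows "u \<bullet> p = 1 - norm (u - p)^2 / 2"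
  using norm_diff_sq[of u p] assms by (simp add: field_simps)

lemma agent_iter:
  fixes u z :: "nat \<Rightarrow> real^'d" and p :: "real^'d"
  assumes "\<eta> > 0" "norm p = 1" "\<And>i. i < K \<Longrightarrow> norm (z i) = 1 \<and> norm (z i - p) < \<delta>"
    and "\<delta> > 0" "\<delta> \<le> 1/2" "\<delta> / (1 - lam \<eta>) \<le> 1" "\<delta> \<le> g"
    and "norm (u 0) = 1" "u 0 \<bullet> p \<ge> g"
    and "\<And>i. i < K \<Longrightarrow> u (Suc i) = hjmr_step \<eta> (z i) (u i)"
  shows "norm (u K - p) \<le> lam \<eta> ^ K * 2 + \<delta> / (1 - lam \<eta>)"
proof -
  define c where "c = \<delta> / (1 - lam \<eta>)"
  define e0 where "e0 = norm (u 0 - p)"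
  have l1: "lam \<eta> < 1" "lam \<eta> > 0" using lam_lt1[OF assms(1)] lam_pos by auto
  have cd: "\<delta> = (1 - lam \<eta>) * c" using l1 by (simp add: c_def)
  have c1: "c \<le> 1" "c \<ge> 0" using assms(4,6) l1 by (simp_all add: c_def)
  have e0: "e0 \<le> 2" unfolding e0_def using norm_triangle_ineq4[of "u 0" p] assms(2,8) by simp
  have main: "k \<le> K \<Longrightarrow> norm (u k) = 1 \<and> norm (u k - p) \<le> lam \<eta> ^ k * e0 + c \<and> norm (u k - p) \<le> max e0 c" for k
  proof (induction k)
    case 0
    then show ?case using assms(8) c1 by (simp add: e0_def)
  next
    case (Suc k)
    hence k: "k < K" by simp
    from Suc.IH k have IH: "norm (u k) = 1" "norm (u k - p) \<le> lam \<eta> ^ k * e0 + c" "norm (u k - p) \<le> max e0 c" by auto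
    have up: "u k \<bullet> p \<ge> \<delta>"
    proof (cases "norm (u k - p) \<le> e0")
      case True
      have "norm (u k - p)^2 \<le> e0^2" using True by (simp add: power_mono)
      hence "u k \<bullet> p \<ge> u 0 \<bullet> p" using unit_inner_eq[OF IH(1) assms(2)] unit_inner_eq[OF assms(8,2)] by (simp add: e0_def)
      thus ?thesis using assms(7,9) by linarith
    next
      case False
      hence "norm (u k - p) \<le> c" using IH(3) by linarith
      hence "norm (u k - p)^2 \<le> 1" using c1 by (metis norm_ge_zero order_trans power_le_one)
      hence "u k \<bullet> p \<ge> 1/2" using unit_inner_eq[OF IH(1) assms(2)] by simp
      thus ?thesis using assms(5) by linarith
    qed
    have zk: "norm (z k) = 1" "norm (z k - p) < \<delta>" using assms(3)[OF k] by auto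
    have st: "norm (u (Suc k) - p) \<le> lam \<eta> * norm (u k - p) + \<delta>"
      unfolding assms(10)[OF k] by (rule step_toward[OF IH(1) assms(2) zk assms(5) up assms(1)])
    have n: "norm (u (Suc k)) = 1" unfolding assms(10)[OF k] by (rule step_norm[OF IH(1)]) (use assms(1) in simp)
    have b1: "lam \<eta> * norm (u k - p) + \<delta> \<le> lam \<eta> ^ Suc k * e0 + c"
    proof -
      have "lam \<eta> * norm (u k - p) \<le> lam \<eta> * (lam \<eta> ^ k * e0 + c)" using IH(2) l1 by (simp add: mult_left_mono)
      thus ?thesis using cd by (simp add: algebra_simps)
    qed
    have b2: "lam \<eta> * norm (u k - p) + \<delta> \<le> max e0 c"
    proof -
      have "lam \<eta> * norm (u k - p) \<le> lam \<eta> * max e0 c" using IH(3) l1 by (simp add: mult_left_mono)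
      moreover have "(1 - lam \<eta>) * c \<le> (1 - lam \<eta>) * max e0 c" using l1 by (simp add: mult_left_mono)
      ultimately show ?thesis using cd by (simp add: algebra_simps)
    qed
    show ?case using n st b1 b2 by linarith
  qed
  have "norm (u K - p) \<le> lam \<eta> ^ K * e0 + c" using main[of K] by simp
  also have "\<dots> \<le> lam \<eta> ^ K * 2 + c" using e0 l1 by (simp add: mult_left_mono)
  finally show ?thesis by (simp add: c_def)
qed

lemma Dd_signs:
  fixes a b :: "real^'d"
  assumes "\<bar>s\<bar> = 1" "\<bar>t\<bar> = 1"
  shows "Dd (s *\<^sub>R a) (t *\<^sub>R b) \<le> norm (a - b)"
proof -
  have "s = 1 \<or> s = -1" "t = 1 \<or> t = -1" using assms by auto
  thus ?thesis unfolding Dd_def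
    by (auto simp: norm_minus_commute algebra_simps simp flip: scaleR_diff_right)
qed

lemma step_scale_sign:
  assumes "s = 1 \<or> s = -1"
  shows "hjmr_step \<eta> z (s *\<^sub>R x) = s *\<^sub>R hjmr_step \<eta> z x"
  using assms step_odd[of \<eta> z x] by auto

lemma config_reset:
  fixes Y :: "nat \<Rightarrow> real^'d^'n::finite" and z :: "nat \<Rightarrow> real^'d"
  assumes "\<eta> > 0" "\<And>i. norm (Y 0 $ i) = 1" "norm (z 0) = 1" "\<And>j. Y 0 $ j \<bullet> z 0 \<noteq> 0"
    and "\<And>i. 1 \<le> i \<Longrightarrow> i \<le> K \<Longrightarrow> norm (z i) = 1 \<and> norm (z i - z 0) < \<delta>"
    and "\<And>i. i \<le> K \<Longrightarrow> Y (Suc i) = stepv \<eta> (z i) (Y i)"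
    and "\<delta> > 0" "\<delta> \<le> 1/2" "\<delta> / (1 - lam \<eta>) \<le> 1" "\<delta> \<le> \<eta> / (1 + \<eta>)"
  shows "Sf i0 (Y (Suc K)) \<le> real CARD('n) * (2 * (lam \<eta> ^ K * 2 + \<delta> / (1 - lam \<eta>)))"
proof -
  define p where "p = z 0"
  define B where "B = lam \<eta> ^ K * 2 + \<delta> / (1 - lam \<eta>)"
  define \<sigma> where "\<sigma> j = sgn (Y 1 $ j \<bullet> p)" for j
  define u where "u j i = \<sigma> j *\<^sub>R (Y (Suc i) $ j)" for j i
  have Y1: "Y 1 = stepv \<eta> p (Y 0)" using assms(6)[of 0] by (simp add: p_def)
  have g: "\<bar>Y 1 $ j \<bullet> p\<bar> \<ge> \<eta> / (1 + \<eta>)" for j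
    unfolding Y1 stepv_def p_def using first_step_inner[OF assms(2) assms(3) assms(4) assms(1)] by simp
  have gp: "\<eta> / (1 + \<eta>) > 0" using assms(1) by simp
  have sig: "\<sigma> j = 1 \<or> \<sigma> j = -1" for j
    using g[of j] gp unfolding \<sigma>_def by (auto simp: sgn_if)
  have sig_abs: "\<bar>\<sigma> j\<bar> = 1" for j using sig[of j] by auto
  have sig_sq: "\<sigma> j * \<sigma> j = 1" for j using sig[of j] by auto
  have Ynorm': "i \<le> Suc K \<Longrightarrow> (\<forall>j. norm (Y i $ j) = 1)" for i
  proof (induction i)
    case 0 thus ?case using assms(2) by simp
  next
    case (Suc i)
    hence "\<forall>j. norm (Y i $ j) = 1" by simp
    hence "norm (stepv \<eta> (z i) (Y i) $ j) = 1" for j using stepv_norm[of "Y i" \<eta> "z i" j] assms(1) by simp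
    thus ?case using assms(6)[of i] Suc.prems by simp
  qed
  have Ynorm: "i \<le> Suc K \<Longrightarrow> norm (Y i $ j) = 1" for i j using Ynorm' by blast
  have uB: "norm (u j K - p) \<le> B" for j
    unfolding B_def
  proof (rule agent_iter[where z = "\<lambda>i. z (Suc i)" and g = \<delta>])
    show "\<eta> > 0" "norm p = 1" "\<delta> > 0" "\<delta> \<le> 1/2" "\<delta> / (1 - lam \<eta>) \<le> 1" "\<delta> \<le> \<delta>"
      using assms by (auto simp: p_def)
    show "i < K \<Longrightarrow> norm (z (Suc i)) = 1 \<and> norm (z (Suc i) - p) < \<delta>" for i
      using assms(5)[of "Suc i"] by (simp add: p_def)
    show "norm (u j 0) = 1" unfolding u_def using sig[of j] Ynorm[of 1 j] by auto
    have "u j 0 \<bullet> p = \<bar>Y 1 $ j \<bullet> p\<bar>" unfolding u_def \<sigma>_def by (simp add: sgn_mult_abs abs_sgn)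
    thus "u j 0 \<bullet> p \<ge> \<delta>" using g[of j] assms(10) by linarith
    show "u j (Suc i) = hjmr_step \<eta> (z (Suc i)) (u j i)" if "i < K" for i
      unfolding u_def using assms(6)[of "Suc i"] that by (simp add: stepv_def step_scale_sign[OF sig[of j]])
  qed
  have "Sf i0 (Y (Suc K)) = (\<Sum>j\<in>UNIV. Dd (\<sigma> i0 *\<^sub>R u i0 K) (\<sigma> j *\<^sub>R u j K))"
    unfolding Sf_def u_def by (intro sum.cong) (simp_all add: scaleR_scaleR sig_sq)
  also have "\<dots> \<le> (\<Sum>j\<in>(UNIV::'n set). 2 * B)"
  proof (rule sum_mono)
    fix j
    have "Dd (\<sigma> i0 *\<^sub>R u i0 K) (\<sigma> j *\<^sub>R u j K) \<le> norm (u i0 K - u j K)"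
      by (rule Dd_signs) (simp_all add: sig_abs)
    also have "\<dots> \<le> norm (u i0 K - p) + norm (u j K - p)"
      using norm_triangle_ineq4[of "u i0 K - p" "u j K - p"] by simp
    also have "\<dots> \<le> 2 * B" using uB[of i0] uB[of j] by simp
    finally show "Dd (\<sigma> i0 *\<^sub>R u i0 K) (\<sigma> j *\<^sub>R u j K) \<le> 2 * B" .
  qed
  also have "\<dots> = real CARD('n) * (2 * B)" by simp
  finally show ?thesis by (simp add: B_def)
qed


definition band :: "real^'d \<Rightarrow> real \<Rightarrow> (real^'d) set" where
  "band c a = {z \<in> sphere 0 1. \<bar>c \<bullet> z\<bar> \<le> a}"

definition cap :: "real^'d \<Rightarrow> real \<Rightarrow> (real^'d) set" where
  "cap p \<delta> = {z \<in> sphere 0 1. norm (z - p) < \<delta>}"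

lemma closed_band: "closed (band c a)"
proof -
  have "band c a = sphere 0 1 \<inter> {z. \<bar>c \<bullet> z\<bar> \<le> a}" by (auto simp: band_def)
  moreover have "closed {z. \<bar>c \<bullet> z\<bar> \<le> (a::real)}"
    by (intro closed_Collect_le continuous_intros)
  ultimately show ?thesis by auto
qed

lemma band_borel: "band c a \<in> sets borel" by (rule borel_closed[OF closed_band])

lemma cap_borel: "cap p \<delta> \<in> sets borel"
proof -
  have "cap p \<delta> = sphere 0 1 \<inter> ball p \<delta>" by (auto simp: cap_def dist_norm norm_minus_commute)
  thus ?thesis by simp
qed

lemma measure_U_bound:
  fixes c :: "real^'d"
  assumes "norm c = 1" "b > 0"
  shows "measure lebesgue {z \<in> cball 0 1. -b \<le> c \<bullet> z \<and> c \<bullet> z < b} \<le> 4 * measure lebesgue (cball (0::real^'d) 2) * b"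
proof -
  define U where "U = {z \<in> cball (0::real^'d) 1. -b \<le> c \<bullet> z \<and> c \<bullet> z < b}"
  have Ub: "U \<in> sets borel"
  proof -
    have "U = cball 0 1 \<inter> {z. -b \<le> c \<bullet> z} \<inter> {z. c \<bullet> z < b}" by (auto simp: U_def)
    moreover have "closed {z. -b \<le> c \<bullet> z}" "open {z. c \<bullet> z < b}"
      by (intro closed_Collect_le open_Collect_less continuous_intros)+
    ultimately show ?thesis by auto
  qed
  have Usub: "U \<subseteq> cball 0 1" by (auto simp: U_def)
  have Us: "U \<in> sets lebesgue" using Ub by simp
  have Ul: "U \<in> lmeasurable"
    by (rule bounded_set_imp_lmeasurable[OF bounded_subset[OF bounded_cball Usub] Us])
  have Ule: "measure lebesgue U \<le> measure lebesgue (cball (0::real^'d) 1)"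
    by (rule measure_mono_fmeasurable[OF Usub Us lmeasurable_cball])
  have c12: "measure lebesgue (cball (0::real^'d) 1) \<le> measure lebesgue (cball (0::real^'d) 2)"
    by (rule measure_mono_fmeasurable[OF _ _ lmeasurable_cball]) auto
  show ?thesis
  proof (cases "b \<le> 1/4")
    case False
    have "measure lebesgue (cball (0::real^'d) 2) * 1 \<le> measure lebesgue (cball (0::real^'d) 2) * (4 * b)"
      using False by (intro mult_left_mono) auto
    hence "measure lebesgue (cball (0::real^'d) 2) \<le> 4 * measure lebesgue (cball (0::real^'d) 2) * b"
      by (simp add: algebra_simps)
    thus ?thesis using Ule c12 unfolding U_def by linarith
  next
    case True
    define N where "N = nat \<lfloor>1 / (2 * b)\<rfloor>"
    have N1: "real N \<ge> 1 / (4 * b)"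
    proof -
      have "real N = real_of_int \<lfloor>1 / (2 * b)\<rfloor>" unfolding N_def using assms True by simp
      moreover have "real_of_int \<lfloor>1 / (2 * b)\<rfloor> \<ge> 1 / (2 * b) - 1" by linarith
      moreover have "1 / (2 * b) - 1 \<ge> 1 / (4 * b)" using assms True by (simp add: field_simps)
      ultimately show ?thesis by linarith
    qed
    have N2: "2 * b * real N \<le> 1"
    proof -
      have "real N \<le> 1 / (2 * b)" unfolding N_def using assms by simp
      thus ?thesis using assms by (simp add: field_simps)
    qed
    define V where "V k = (+) ((2 * b * real k) *\<^sub>R c) ` U" for k :: nat
    have Vmeas: "measure lebesgue (V k) = measure lebesgue U" for k unfolding V_def by (rule measure_translation)
    have Vl: "V k \<in> lmeasurable" for k unfolding V_def by (rule measurable_translation[OF Ul])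
    have Vin: "c \<bullet> v \<ge> 2 * b * real k - b \<and> c \<bullet> v < 2 * b * real k + b" if "v \<in> V k" for v k
      using that assms(1) unfolding V_def U_def by (auto simp: inner_add_right dot_square_norm)
    have disj: "disjoint_family_on V {..<N}"
      unfolding disjoint_family_on_def
    proof (intro ballI impI)
      fix k l assume "k \<in> {..<N}" "l \<in> {..<N}" "k \<noteq> l"
      show "V k \<inter> V l = {}"
      proof (rule ccontr)
        assume "V k \<inter> V l \<noteq> {}"
        then obtain v where "v \<in> V k" "v \<in> V l" by auto
        from Vin[OF this(1)] Vin[OF this(2)] have "2 * b * real k < 2 * b * real l + 2 * b" "2 * b * real l < 2 * b * real k + 2 * b" by linarith+
        hence "b * (real k - real l - 1) < 0" "b * (real l - real k - 1) < 0" by (simp_all add: algebra_simps)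
        hence "real k < real l + 1" "real l < real k + 1" using assms(2) by (simp_all add: mult_less_0_iff)
        thus False using \<open>k \<noteq> l\<close> by linarith
      qed
    qed
    have sub: "(\<Union>k\<in>{..<N}. V k) \<subseteq> cball 0 2"
    proof
      fix v assume "v \<in> (\<Union>k\<in>{..<N}. V k)"
      then obtain k u where k: "k < N" and u: "u \<in> U" and v: "v = (2 * b * real k) *\<^sub>R c + u" by (auto simp: V_def)
      have "norm v \<le> norm ((2 * b * real k) *\<^sub>R c) + norm u" unfolding v by (rule norm_triangle_ineq)
      also have "\<dots> \<le> 2 * b * real N + 1"
      proof -
        have "2*b*real k \<le> 2*b*real N" using k assms(2) by (intro mult_left_mono) auto
        moreover have "norm ((2 * b * real k) *\<^sub>R c) = 2 * b * real k" using assms by simp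
        moreover have "norm u \<le> 1" using u by (simp add: U_def)
        ultimately show ?thesis by linarith
      qed
      finally show "v \<in> cball 0 2" using N2 by simp
    qed
    have "real N * measure lebesgue U = (\<Sum>k\<in>{..<N}. measure lebesgue (V k))" by (simp add: Vmeas)
    also have "\<dots> = measure lebesgue (\<Union>k\<in>{..<N}. V k)"
      by (rule measure_finite_Union[symmetric]) (use Vl disj fmeasurableD2[OF Vl] in auto)
    also have "\<dots> \<le> measure lebesgue (cball (0::real^'d) 2)"
      by (rule measure_mono_fmeasurable[OF sub _ lmeasurable_cball]) (use Vl in auto)
    finally have A: "real N * measure lebesgue U \<le> measure lebesgue (cball (0::real^'d) 2)" .
    have "1 / (4 * b) * measure lebesgue U \<le> real N * measure lebesgue U"
      using N1 by (intro mult_right_mono) auto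
    hence "1 / (4 * b) * measure lebesgue U \<le> measure lebesgue (cball (0::real^'d) 2)" using A by linarith
    thus ?thesis using assms(2) by (simp add: U_def field_simps)
  qed
qed

definition cone :: "(real^'d) set \<Rightarrow> (real^'d) set" where
  "cone A = {r *\<^sub>R x | r x. x \<in> A \<and> 0 < r \<and> r \<le> 1}"

lemma sphere_mu_cone: fixes A :: "(real^'d) set" shows "sphere_mu A = measure lebesgue (cone A) / measure lebesgue (ball (0::real^'d) 1)"
  by (simp add: sphere_mu_def cone_def)

lemma closed_slab: "closed {z \<in> cball (0::real^'d) 1. \<bar>c \<bullet> z\<bar> \<le> a}"
proof -
  have "{z \<in> cball (0::real^'d) 1. \<bar>c \<bullet> z\<bar> \<le> a} = cball 0 1 \<inter> {z. \<bar>c \<bullet> z\<bar> \<le> a}" by auto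
  moreover have "closed {z. \<bar>c \<bullet> z\<bar> \<le> (a::real)}"
    by (intro closed_Collect_le continuous_intros)
  ultimately show ?thesis by auto
qed

lemma slab_bound:
  fixes c :: "real^'d"
  assumes "norm c = 1" "a \<ge> 0"
  shows "measure lebesgue {z \<in> cball 0 1. \<bar>c \<bullet> z\<bar> \<le> a} \<le> 4 * measure lebesgue (cball (0::real^'d) 2) * a"
proof (rule field_le_epsilon)
  fix e :: real assume e: "e > 0"
  define W where "W = measure lebesgue (cball (0::real^'d) 2)"
  have W0: "W \<ge> 0" by (simp add: W_def)
  define b where "b = a + e / (4 * W + 1)"
  have b: "b > 0" using assms e W0 by (simp add: b_def add_nonneg_pos)
  have ss: "{z \<in> cball 0 1. \<bar>c \<bullet> z\<bar> \<le> a} \<subseteq> {z \<in> cball 0 1. -b \<le> c \<bullet> z \<and> c \<bullet> z < b}"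
  proof -
    have "e / (4 * W + 1) > 0" using e W0 by simp
    thus ?thesis by (auto simp: b_def)
  qed
  have Us: "{z \<in> cball (0::real^'d) 1. -b \<le> c \<bullet> z \<and> c \<bullet> z < b} \<in> lmeasurable"
  proof -
    have "{z \<in> cball (0::real^'d) 1. -b \<le> c \<bullet> z \<and> c \<bullet> z < b} = cball 0 1 \<inter> {z. -b \<le> c \<bullet> z} \<inter> {z. c \<bullet> z < b}" by auto
    moreover have "closed {z. -b \<le> c \<bullet> z}" "open {z. c \<bullet> z < b}"
      by (intro closed_Collect_le open_Collect_less continuous_intros)+
    ultimately have "{z \<in> cball (0::real^'d) 1. -b \<le> c \<bullet> z \<and> c \<bullet> z < b} \<in> sets borel" by auto
    thus ?thesis by (intro bounded_set_imp_lmeasurable bounded_subset[OF bounded_cball[of 0 1]]) auto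
  qed
  have Ss: "{z \<in> cball (0::real^'d) 1. \<bar>c \<bullet> z\<bar> \<le> a} \<in> sets lebesgue"
  proof -
    have "closed {z \<in> cball (0::real^'d) 1. \<bar>c \<bullet> z\<bar> \<le> a}" by (rule closed_slab)
    thus ?thesis by simp
  qed
  have "measure lebesgue {z \<in> cball 0 1. \<bar>c \<bullet> z\<bar> \<le> a} \<le> measure lebesgue {z \<in> cball (0::real^'d) 1. -b \<le> c \<bullet> z \<and> c \<bullet> z < b}"
    by (rule measure_mono_fmeasurable[OF ss Ss Us])
  also have "\<dots> \<le> 4 * W * b" unfolding W_def by (rule measure_U_bound[OF assms(1) b])
  also have "\<dots> = 4 * W * a + e * (4 * W / (4 * W + 1))" using W0 by (simp add: b_def field_simps)
  also have "\<dots> \<le> 4 * W * a + e"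
  proof -
    have "4 * W / (4 * W + 1) \<le> 1" using W0 by simp
    hence "e * (4 * W / (4 * W + 1)) \<le> e" using e mult_left_mono[of "4 * W / (4 * W + 1)" 1 e] by simp
    thus ?thesis by simp
  qed
  finally show "measure lebesgue {z \<in> cball 0 1. \<bar>c \<bullet> z\<bar> \<le> a} \<le> 4 * measure lebesgue (cball (0::real^'d) 2) * a + e"
    by (simp add: W_def)
qed

lemma V1_pos: "measure lebesgue (ball (0::real^'d) r) > 0" if "r > 0"
  using content_ball_pos[OF that, of 0] by simp

lemma sphere_mu_band:
  fixes c :: "real^'d"
  assumes "norm c = 1" "a \<ge> 0"
  shows "sphere_mu (band c a) \<le> 4 * measure lebesgue (cball (0::real^'d) 2) / measure lebesgue (ball (0::real^'d) 1) * a"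
proof -
  have sub: "cone (band c a) \<subseteq> {z \<in> cball 0 1. \<bar>c \<bullet> z\<bar> \<le> a}"
  proof
    fix z assume "z \<in> cone (band c a)"
    then obtain r x where z: "z = r *\<^sub>R x" and x: "x \<in> band c a" and r: "0 < r" "r \<le> 1" by (auto simp: cone_def)
    have "\<bar>c \<bullet> z\<bar> = r * \<bar>c \<bullet> x\<bar>" using r by (simp add: z abs_mult)
    also have "\<dots> \<le> 1 * a" using x r assms(2) by (intro mult_mono) (auto simp: band_def)
    finally show "z \<in> {z \<in> cball 0 1. \<bar>c \<bullet> z\<bar> \<le> a}" using x r by (auto simp: z band_def)
  qed
  have cl: "{z \<in> cball (0::real^'d) 1. \<bar>c \<bullet> z\<bar> \<le> a} \<in> lmeasurable"
  proof -
    have "closed {z \<in> cball (0::real^'d) 1. \<bar>c \<bullet> z\<bar> \<le> a}" by (rule closed_slab)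
    thus ?thesis by (intro bounded_set_imp_lmeasurable bounded_subset[OF bounded_cball[of 0 1]]) auto
  qed
  have "measure lebesgue (cone (band c a)) \<le> measure lebesgue {z \<in> cball (0::real^'d) 1. \<bar>c \<bullet> z\<bar> \<le> a}"
  proof (cases "cone (band c a) \<in> sets lebesgue")
    case True thus ?thesis by (rule measure_mono_fmeasurable[OF sub _ cl])
  next
    case False thus ?thesis by (simp add: measure_notin_sets)
  qed
  also have "\<dots> \<le> 4 * measure lebesgue (cball (0::real^'d) 2) * a" by (rule slab_bound[OF assms])
  finally have "measure lebesgue (cone (band c a)) / measure lebesgue (ball (0::real^'d) 1) \<le> 4 * measure lebesgue (cball (0::real^'d) 2) * a / measure lebesgue (ball (0::real^'d) 1)"
    using V1_pos[of 1] by (intro divide_right_mono) auto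
  thus ?thesis unfolding sphere_mu_cone by simp
qed

lemma cone_cap_eq:
  fixes p :: "real^'d"
  shows "cone (cap p \<delta>) = {z. z \<noteq> 0 \<and> norm z \<le> 1 \<and> norm ((1 / norm z) *\<^sub>R z - p) < \<delta>}"
proof (intro set_eqI iffI)
  fix z assume "z \<in> cone (cap p \<delta>)"
  then obtain r x where z: "z = r *\<^sub>R x" and x: "x \<in> cap p \<delta>" and r: "0 < r" "r \<le> 1" by (auto simp: cone_def)
  have nx: "norm x = 1" using x by (simp add: cap_def)
  have nz: "norm z = r" using r nx by (simp add: z)
  have "(1 / norm z) *\<^sub>R z = x" using r nx by (simp add: nz z)
  thus "z \<in> {z. z \<noteq> 0 \<and> norm z \<le> 1 \<and> norm ((1 / norm z) *\<^sub>R z - p) < \<delta>}"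
    using x r nz nx by (auto simp: cap_def)
next
  fix z assume z: "z \<in> {z. z \<noteq> 0 \<and> norm z \<le> 1 \<and> norm ((1 / norm z) *\<^sub>R z - p) < \<delta>}"
  hence "z = norm z *\<^sub>R ((1 / norm z) *\<^sub>R z)" "(1 / norm z) *\<^sub>R z \<in> cap p \<delta>" "0 < norm z" "norm z \<le> 1"
    by (auto simp: cap_def)
  thus "z \<in> cone (cap p \<delta>)" unfolding cone_def by blast
qed

lemma cone_cap_borel:
  fixes p :: "real^'d"
  shows "cone (cap p \<delta>) \<in> sets borel"
  unfolding cone_cap_eq by measurable

lemma ball_transl: "ball (c::'a::real_normed_vector) r = (+) c ` ball 0 r"
proof (intro set_eqI iffI)
  fix x assume "x \<in> ball c r"
  hence "x - c \<in> ball 0 r" by (simp add: dist_norm norm_minus_commute)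
  thus "x \<in> (+) c ` ball 0 r" by (intro image_eqI[of _ _ "x - c"]) auto
qed (auto simp: dist_norm)

lemma sphere_mu_cap:
  fixes p :: "real^'d"
  assumes "norm p = 1" "0 < \<delta>" "\<delta> \<le> 1"
  shows "sphere_mu (cap p \<delta>) \<ge> measure lebesgue (ball (0::real^'d) (\<delta>/4)) / measure lebesgue (ball (0::real^'d) 1)"
proof -
  have sub: "ball ((1/2) *\<^sub>R p) (\<delta>/4) \<subseteq> cone (cap p \<delta>)"
  proof
    fix z assume z: "z \<in> ball ((1/2) *\<^sub>R p) (\<delta>/4)"
    hence dz: "norm (z - (1/2) *\<^sub>R p) < \<delta>/4" by (simp add: dist_norm norm_minus_commute)
    have np: "norm ((1/2) *\<^sub>R p) = 1/2" using assms by simp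
    have "norm z \<le> norm ((1/2) *\<^sub>R p) + norm (z - (1/2) *\<^sub>R p)" by (rule norm_triangle_sub)
    hence nz1: "norm z \<le> 1" using dz np assms by linarith
    have "norm ((1/2) *\<^sub>R p) \<le> norm z + norm (z - (1/2) *\<^sub>R p)" using norm_triangle_ineq4[of z "z - (1/2) *\<^sub>R p"] by simp
    hence nz2: "norm z \<ge> 1/4" using dz np assms by linarith
    have "norm ((1 / norm z) *\<^sub>R z - (1 / norm ((1/2) *\<^sub>R p)) *\<^sub>R ((1/2) *\<^sub>R p)) \<le> norm (z - (1/2) *\<^sub>R p) / (1/4)"
      by (rule normalize_diff_le) (use nz2 np in auto)
    also have "\<dots> < \<delta>" using dz by simp
    finally have "norm ((1 / norm z) *\<^sub>R z - p) < \<delta>" using np by simp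
    thus "z \<in> cone (cap p \<delta>)" unfolding cone_cap_eq using nz1 nz2 by auto
  qed
  have "measure lebesgue (ball (0::real^'d) (\<delta>/4)) = measure lebesgue (ball ((1/2) *\<^sub>R p) (\<delta>/4))"
    by (simp only: ball_transl[of "(1/2) *\<^sub>R p"] measure_translation)
  also have "\<dots> \<le> measure lebesgue (cone (cap p \<delta>))"
  proof (rule measure_mono_fmeasurable[OF sub])
    show "ball ((1/2) *\<^sub>R p) (\<delta>/4) \<in> sets lebesgue" by simp
    have "cone (cap p \<delta>) \<subseteq> cball 0 1" unfolding cone_cap_eq by auto
    thus "cone (cap p \<delta>) \<in> fmeasurable lebesgue"
      using cone_cap_borel[of p \<delta>] by (intro bounded_set_imp_lmeasurable bounded_subset[OF bounded_cball[of 0 1]]) auto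
  qed
  finally show ?thesis unfolding sphere_mu_cone using V1_pos[of 1] by (intro divide_right_mono) auto
qed


locale hj =
  fixes M :: "'w measure" and \<xi> :: "nat \<Rightarrow> 'w \<Rightarrow> real^'d"
  assumes ps: "prob_space M"
    and rv: "\<And>t. \<xi> t \<in> borel_measurable M"
    and indep: "prob_space.indep_vars M (\<lambda>_. borel) \<xi> UNIV"
begin

sublocale prob_space M by (rule ps)

definition H :: "nat \<Rightarrow> 'w \<Rightarrow> (nat \<Rightarrow> real^'d)" where
  "H s \<omega> = restrict (\<lambda>i. \<xi> i \<omega>) {..<s}"

abbreviation PS :: "nat \<Rightarrow> (nat \<Rightarrow> real^'d) measure" where
  "PS s \<equiv> PiM {..<s} (\<lambda>_. borel)"

lemma H_meas: "H s \<in> measurable M (PS s)"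
  unfolding H_def by (rule measurable_restrict) (use rv in auto)

definition G :: "nat \<Rightarrow> 'w \<Rightarrow> (nat \<Rightarrow> real^'d)" where
  "G s \<omega> = restrict (\<lambda>i. \<xi> i \<omega>) {s}"

abbreviation PG :: "nat \<Rightarrow> (nat \<Rightarrow> real^'d) measure" where
  "PG s \<equiv> PiM {s} (\<lambda>_. borel)"

lemma G_meas: "G s \<in> measurable M (PG s)"
  unfolding G_def by (rule measurable_restrict) (use rv in auto)

lemma indep_H: "indep_var (PS s) (H s) (PG s) (G s)"
proof -
  define K where "K b = (if b then {..<s} else {s})" for b
  have "indep_vars (\<lambda>b. PiM (K b) (\<lambda>_. borel)) (\<lambda>b \<omega>. restrict (\<lambda>i. \<xi> i \<omega>) (K b)) UNIV"
    by (rule indep_vars_restrict[OF indep]) (auto simp: K_def disjoint_family_on_def)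
  thus ?thesis
    unfolding indep_var_def H_def G_def
    by (rule indep_vars_cong[THEN iffD1, rotated 3]) (auto simp: K_def split: bool.split)
qed

lemma G_s: "G s \<omega> s = \<xi> s \<omega>" by (simp add: G_def)

lemma CL_eq:
  fixes \<Phi> :: "(nat \<Rightarrow> real^'d) \<Rightarrow> bool" and Q :: "(nat \<Rightarrow> real^'d) \<Rightarrow> real^'d \<Rightarrow> bool"
  assumes \<Phi>m: "Measurable.pred (PS s) \<Phi>"
    and Qm: "Measurable.pred (PS s \<Otimes>\<^sub>M PG s) (\<lambda>x. Q (fst x) (snd x s))"
  shows "emeasure M {\<omega> \<in> space M. \<Phi> (H s \<omega>) \<and> Q (H s \<omega>) (\<xi> s \<omega>)}
    = (\<integral>\<^sup>+h. indicator {h \<in> space (PS s). \<Phi> h} h * emeasure M {\<omega> \<in> space M. Q h (\<xi> s \<omega>)} \<partial>(distr M (PS s) (H s)))"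
proof -
  define DH where "DH = distr M (PS s) (H s)"
  define DG where "DG = distr M (PG s) (G s)"
  interpret DG: prob_space DG unfolding DG_def by (rule prob_space_distr[OF G_meas])
  have eqD: "DH \<Otimes>\<^sub>M DG = distr M (PS s \<Otimes>\<^sub>M PG s) (\<lambda>\<omega>. (H s \<omega>, G s \<omega>))"
    using indep_H[of s] unfolding indep_var_distribution_eq DH_def DG_def by auto
  define S where "S = {x \<in> space (PS s \<Otimes>\<^sub>M PG s). \<Phi> (fst x) \<and> Q (fst x) (snd x s)}"
  have Ss: "S \<in> sets (PS s \<Otimes>\<^sub>M PG s)" unfolding S_def using \<Phi>m Qm by measurable
  have HG: "(\<lambda>\<omega>. (H s \<omega>, G s \<omega>)) \<in> measurable M (PS s \<Otimes>\<^sub>M PG s)"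
    using H_meas G_meas by (rule measurable_Pair)
  have "emeasure M {\<omega> \<in> space M. \<Phi> (H s \<omega>) \<and> Q (H s \<omega>) (\<xi> s \<omega>)} = emeasure M ((\<lambda>\<omega>. (H s \<omega>, G s \<omega>)) -` S \<inter> space M)"
    using measurable_space[OF HG] by (intro arg_cong[where f="emeasure M"]) (auto simp: S_def G_s)
  also have "\<dots> = emeasure (DH \<Otimes>\<^sub>M DG) S" unfolding eqD by (rule emeasure_distr[OF HG Ss, symmetric])
  also have "\<dots> = (\<integral>\<^sup>+h. emeasure DG (Pair h -` S) \<partial>DH)"
  proof -
    have "sets (DH \<Otimes>\<^sub>M DG) = sets (PS s \<Otimes>\<^sub>M PG s)"
      by (rule sets_pair_measure_cong) (simp_all add: DH_def DG_def)
    hence "S \<in> sets (DH \<Otimes>\<^sub>M DG)" using Ss by (simp only:)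
    thus ?thesis by (rule DG.emeasure_pair_measure_alt)
  qed
  also have "\<dots> = (\<integral>\<^sup>+h. indicator {h \<in> space (PS s). \<Phi> h} h * emeasure M {\<omega> \<in> space M. Q h (\<xi> s \<omega>)} \<partial>DH)"
  proof (rule nn_integral_cong)
    fix h assume h: "h \<in> space DH"
    hence hs: "h \<in> space (PS s)" by (simp add: DH_def)
    show "emeasure DG (Pair h -` S) = indicator {h \<in> space (PS s). \<Phi> h} h * emeasure M {\<omega> \<in> space M. Q h (\<xi> s \<omega>)}"
    proof (cases "\<Phi> h")
      case False
      hence "Pair h -` S = {}" by (auto simp: S_def)
      thus ?thesis using False hs by simp
    next
      case True
      hence e: "Pair h -` S = {g \<in> space (PG s). Q h (g s)}" using hs by (auto simp: S_def space_pair_measure)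
      have gs: "{g \<in> space (PG s). Q h (g s)} \<in> sets (PG s)"
        using measurable_Pair2[OF Qm hs] by (simp add: pred_def Measurable.pred_def)
      have "emeasure DG {g \<in> space (PG s). Q h (g s)} = emeasure M (G s -` {g \<in> space (PG s). Q h (g s)} \<inter> space M)"
        unfolding DG_def by (rule emeasure_distr[OF G_meas gs])
      also have "\<dots> = emeasure M {\<omega> \<in> space M. Q h (\<xi> s \<omega>)}"
        using measurable_space[OF G_meas] by (intro arg_cong[where f="emeasure M"]) (auto simp: G_s)
      finally show ?thesis using True e hs by simp
    qed
  qed
  finally show ?thesis by (simp add: DH_def)
qed

lemma DH_set: 
  assumes "Measurable.pred (PS s) \<Phi>"
  shows "emeasure (distr M (PS s) (H s)) {h \<in> space (PS s). \<Phi> h} = emeasure M {\<omega> \<in> space M. \<Phi> (H s \<omega>)}"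
proof -
  have "{h \<in> space (PS s). \<Phi> h} \<in> sets (PS s)" using assms by (simp add: Measurable.pred_def)
  hence "emeasure (distr M (PS s) (H s)) {h \<in> space (PS s). \<Phi> h} = emeasure M (H s -` {h \<in> space (PS s). \<Phi> h} \<inter> space M)"
    by (rule emeasure_distr[OF H_meas])
  also have "\<dots> = emeasure M {\<omega> \<in> space M. \<Phi> (H s \<omega>)}"
    using measurable_space[OF H_meas] by (intro arg_cong[where f="emeasure M"]) blast
  finally show ?thesis .
qed

lemma CL_le:
  fixes \<Phi> :: "(nat \<Rightarrow> real^'d) \<Rightarrow> bool" and Q :: "(nat \<Rightarrow> real^'d) \<Rightarrow> real^'d \<Rightarrow> bool"
  assumes \<Phi>m: "Measurable.pred (PS s) \<Phi>"
    and Qm: "Measurable.pred (PS s \<Otimes>\<^sub>M PG s) (\<lambda>x. Q (fst x) (snd x s))"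
    and b: "b \<ge> 0" and bnd: "\<And>h. h \<in> space (PS s) \<Longrightarrow> \<Phi> h \<Longrightarrow> prob {\<omega> \<in> space M. Q h (\<xi> s \<omega>)} \<le> b"
  shows "prob {\<omega> \<in> space M. \<Phi> (H s \<omega>) \<and> Q (H s \<omega>) (\<xi> s \<omega>)} \<le> b * prob {\<omega> \<in> space M. \<Phi> (H s \<omega>)}"
proof -
  have "ennreal (prob {\<omega> \<in> space M. \<Phi> (H s \<omega>) \<and> Q (H s \<omega>) (\<xi> s \<omega>)}) = emeasure M {\<omega> \<in> space M. \<Phi> (H s \<omega>) \<and> Q (H s \<omega>) (\<xi> s \<omega>)}"
    by (simp add: emeasure_eq_measure)
  also have "\<dots> = (\<integral>\<^sup>+h. indicator {h \<in> space (PS s). \<Phi> h} h * emeasure M {\<omega> \<in> space M. Q h (\<xi> s \<omega>)} \<partial>(distr M (PS s) (H s)))"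
    by (rule CL_eq[OF \<Phi>m Qm])
  also have "\<dots> \<le> (\<integral>\<^sup>+h. ennreal b * indicator {h \<in> space (PS s). \<Phi> h} h \<partial>(distr M (PS s) (H s)))"
  proof (rule nn_integral_mono)
    fix h assume h: "h \<in> space (distr M (PS s) (H s))"
    show "indicator {h \<in> space (PS s). \<Phi> h} h * emeasure M {\<omega> \<in> space M. Q h (\<xi> s \<omega>)} \<le> ennreal b * indicator {h \<in> space (PS s). \<Phi> h} h"
    proof (cases "\<Phi> h")
      case True
      have "emeasure M {\<omega> \<in> space M. Q h (\<xi> s \<omega>)} = ennreal (prob {\<omega> \<in> space M. Q h (\<xi> s \<omega>)})"
        by (simp add: emeasure_eq_measure)
      also have "\<dots> \<le> ennreal b" using bnd[OF _ True] h by (simp add: ennreal_leI)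
      finally show ?thesis using True h by simp
    qed simp
  qed
  also have "\<dots> = ennreal b * emeasure (distr M (PS s) (H s)) {h \<in> space (PS s). \<Phi> h}"
    by (rule nn_integral_cmult_indicator) (use \<Phi>m in \<open>simp add: Measurable.pred_def\<close>)
  also have "\<dots> = ennreal b * ennreal (prob {\<omega> \<in> space M. \<Phi> (H s \<omega>)})"
    using DH_set[OF \<Phi>m] by (simp add: emeasure_eq_measure)
  also have "\<dots> = ennreal (b * prob {\<omega> \<in> space M. \<Phi> (H s \<omega>)})" using b by (simp add: ennreal_mult)
  finally show ?thesis using b by (simp add: ennreal_le_iff)
qed

lemma CL_ge:
  fixes \<Phi> :: "(nat \<Rightarrow> real^'d) \<Rightarrow> bool" and Q :: "(nat \<Rightarrow> real^'d) \<Rightarrow> real^'d \<Rightarrow> bool"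
  assumes \<Phi>m: "Measurable.pred (PS s) \<Phi>"
    and Qm: "Measurable.pred (PS s \<Otimes>\<^sub>M PG s) (\<lambda>x. Q (fst x) (snd x s))"
    and b: "b \<ge> 0" and bnd: "\<And>h. h \<in> space (PS s) \<Longrightarrow> \<Phi> h \<Longrightarrow> prob {\<omega> \<in> space M. Q h (\<xi> s \<omega>)} \<ge> b"
  shows "prob {\<omega> \<in> space M. \<Phi> (H s \<omega>) \<and> Q (H s \<omega>) (\<xi> s \<omega>)} \<ge> b * prob {\<omega> \<in> space M. \<Phi> (H s \<omega>)}"
proof -
  have "ennreal (b * prob {\<omega> \<in> space M. \<Phi> (H s \<omega>)}) = ennreal b * ennreal (prob {\<omega> \<in> space M. \<Phi> (H s \<omega>)})"
    using b by (simp add: ennreal_mult)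
  also have "\<dots> = ennreal b * emeasure (distr M (PS s) (H s)) {h \<in> space (PS s). \<Phi> h}"
    using DH_set[OF \<Phi>m] by (simp add: emeasure_eq_measure)
  also have "\<dots> = (\<integral>\<^sup>+h. ennreal b * indicator {h \<in> space (PS s). \<Phi> h} h \<partial>(distr M (PS s) (H s)))"
    by (rule nn_integral_cmult_indicator[symmetric]) (use \<Phi>m in \<open>simp add: Measurable.pred_def\<close>)
  also have "\<dots> \<le> (\<integral>\<^sup>+h. indicator {h \<in> space (PS s). \<Phi> h} h * emeasure M {\<omega> \<in> space M. Q h (\<xi> s \<omega>)} \<partial>(distr M (PS s) (H s)))"
  proof (rule nn_integral_mono)
    fix h assume h: "h \<in> space (distr M (PS s) (H s))"
    show "ennreal b * indicator {h \<in> space (PS s). \<Phi> h} h \<le> indicator {h \<in> space (PS s). \<Phi> h} h * emeasure M {\<omega> \<in> space M. Q h (\<xi> s \<omega>)}"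
    proof (cases "\<Phi> h")
      case True
      have "ennreal b \<le> ennreal (prob {\<omega> \<in> space M. Q h (\<xi> s \<omega>)})" using bnd[OF _ True] h by (simp add: ennreal_leI)
      also have "\<dots> = emeasure M {\<omega> \<in> space M. Q h (\<xi> s \<omega>)}"
        by (simp add: emeasure_eq_measure)
      finally show ?thesis using True h by simp
    qed simp
  qed
  also have "\<dots> = emeasure M {\<omega> \<in> space M. \<Phi> (H s \<omega>) \<and> Q (H s \<omega>) (\<xi> s \<omega>)}"
    by (rule CL_eq[OF \<Phi>m Qm, symmetric])
  also have "\<dots> = ennreal (prob {\<omega> \<in> space M. \<Phi> (H s \<omega>) \<and> Q (H s \<omega>) (\<xi> s \<omega>)})"
    by (simp add: emeasure_eq_measure)
  finally show ?thesis by (simp add: ennreal_le_iff)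
qed

end


lemma hjmr_step_meas[measurable]: "(\<lambda>x. hjmr_step \<eta> (fst x) (snd x)) \<in> borel_measurable (borel \<Otimes>\<^sub>M (borel :: (real^'d) measure))"
  unfolding hjmr_step_def proj_sphere_def by measurable

lemma vec_nth_meas[measurable]: "(\<lambda>X::real^'d^'n. X $ i) \<in> borel_measurable borel"
  by (intro borel_measurable_continuous_onI continuous_intros)

lemma vec_lambda_meas:
  fixes f :: "'a \<Rightarrow> real^'d^'n"
  assumes "\<And>i. (\<lambda>x. f x $ i) \<in> borel_measurable N"
  shows "f \<in> borel_measurable N"
proof (subst borel_measurable_euclidean_space, intro ballI)
  fix b :: "real^'d^'n" assume "b \<in> Basis"
  then obtain i u where b: "b = axis i u" and u: "u \<in> Basis" by (auto simp: Basis_vec_def)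
  have "(\<lambda>x. f x \<bullet> b) = (\<lambda>x. (f x $ i) \<bullet> u)" by (simp add: b inner_axis)
  also have "\<dots> \<in> borel_measurable N" using assms[of i] by measurable
  finally show "(\<lambda>x. f x \<bullet> b) \<in> borel_measurable N" .
qed

lemma traj_meas:
  assumes "{..<t} \<subseteq> I"
  shows "(\<lambda>h. hjmr_traj \<eta> X0 h t) \<in> borel_measurable (PiM I (\<lambda>_. (borel :: (real^'d) measure)))"
  using assms
proof (induction t)
  case 0 thus ?case by simp
next
  case (Suc t)
  have sub: "{..<t} \<subseteq> I" and tI: "t \<in> I" using Suc.prems by auto
  have IH: "(\<lambda>h. hjmr_traj \<eta> X0 h t) \<in> borel_measurable (PiM I (\<lambda>_. borel))" by (rule Suc.IH[OF sub])
  show ?case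
  proof (rule vec_lambda_meas)
    fix i
    have c: "(\<lambda>h. h t) \<in> measurable (PiM I (\<lambda>_. (borel :: (real^'d) measure))) borel"
      by (rule measurable_component_singleton[OF tI])
    have "(\<lambda>h. hjmr_step \<eta> (h t) (hjmr_traj \<eta> X0 h t $ i)) \<in> borel_measurable (PiM I (\<lambda>_. borel))"
    proof -
      have IHi: "(\<lambda>h. hjmr_traj \<eta> X0 h t $ i) \<in> borel_measurable (PiM I (\<lambda>_. borel))"
        using IH by measurable
      show ?thesis using measurable_compose[OF measurable_Pair[OF c IHi] hjmr_step_meas[of \<eta>]] by simp
    qed
    thus "(\<lambda>h. hjmr_traj \<eta> X0 h (Suc t) $ i) \<in> borel_measurable (PiM I (\<lambda>_. borel))" by simp
  qed
qed

lemma traj_restrict: "t \<le> s \<Longrightarrow> hjmr_traj \<eta> X0 (restrict f {..<s}) t = hjmr_traj \<eta> X0 f t"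
  by (induction t) auto

lemma Dd_meas[measurable (raw)]:
  assumes f: "f \<in> borel_measurable N" and g: "g \<in> borel_measurable N"
  shows "(\<lambda>x. Dd (f x) (g x :: real^'d)) \<in> borel_measurable N"
proof -
  have "(\<lambda>p. Dd (fst p) (snd p :: real^'d)) \<in> borel_measurable borel"
    by (intro borel_measurable_continuous_onI) (simp add: Dd_def continuous_intros)
  hence c: "(\<lambda>p. Dd (fst p) (snd p :: real^'d)) \<in> borel_measurable (borel \<Otimes>\<^sub>M borel)" by (simp add: borel_prod)
  show ?thesis using measurable_compose[OF measurable_Pair[OF f g] c] by simp
qed

lemma Sf_meas[measurable]: "(Sf i0 :: real^'d^'n::finite \<Rightarrow> real) \<in> borel_measurable borel"
  unfolding Sf_def by measurable


locale hj2 = hj M \<xi> for M :: "'w measure" and \<xi> :: "nat \<Rightarrow> 'w \<Rightarrow> real^'d" +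
  fixes \<eta> C C' :: real and X0 :: "real^'d^'n::finite" and i0 :: 'n
  assumes eta: "\<eta> > 0"
    and on_sphere: "\<And>t. AE \<omega> in M. \<xi> t \<omega> \<in> sphere 0 1"
    and Cpos: "C > 0" and C'pos: "C' > 0"
    and bounds: "\<And>t A. A \<in> sets borel \<Longrightarrow> A \<subseteq> sphere 0 1 \<Longrightarrow>
        C * sphere_mu A \<le> measure M (\<xi> t -` A \<inter> space M) \<and>
        measure M (\<xi> t -` A \<inter> space M) \<le> C' * sphere_mu A"
    and X0n: "\<And>i. norm (X0 $ i) = 1"
begin

definition TR :: "nat \<Rightarrow> (nat \<Rightarrow> real^'d) \<Rightarrow> real^'d^'n" where
  "TR t f = hjmr_traj \<eta> X0 f t"

definition Xi :: "'w \<Rightarrow> nat \<Rightarrow> real^'d" where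
  "Xi \<omega> = (\<lambda>i. \<xi> i \<omega>)"


lemma TR_norm: "norm (TR t f $ i) = 1"
  unfolding TR_def by (rule traj_norm) (use X0n eta in auto)

lemma TR_restrict: "t \<le> s \<Longrightarrow> TR t (restrict f {..<s}) = TR t f"
  unfolding TR_def by (rule traj_restrict)

lemma TR_meas: "t \<le> s \<Longrightarrow> TR t \<in> borel_measurable (PS s)"
  unfolding TR_def by (rule traj_meas) auto

lemma H_Xi: "H s \<omega> = restrict (Xi \<omega>) {..<s}" by (simp add: H_def Xi_def)

lemma sphere_ev: "{\<omega> \<in> space M. \<xi> s \<omega> \<notin> sphere 0 1} \<in> events"
proof -
  have "{\<omega> \<in> space M. \<xi> s \<omega> \<notin> sphere 0 1} = space M - (\<xi> s -` sphere 0 1 \<inter> space M)" by auto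
  moreover have "\<xi> s -` sphere 0 1 \<inter> space M \<in> events" by (rule measurable_sets[OF rv]) simp
  ultimately show ?thesis by auto
qed

lemma not_sphere_null: "prob {\<omega> \<in> space M. \<xi> s \<omega> \<notin> sphere 0 1} = 0"
proof -
  have "{\<omega> \<in> space M. \<xi> s \<omega> \<notin> sphere 0 1} \<in> events" by (rule sphere_ev)
  hence "emeasure M {\<omega> \<in> space M. \<xi> s \<omega> \<notin> sphere 0 1} = 0"
    using AE_iff_measurable[of "{\<omega> \<in> space M. \<xi> s \<omega> \<notin> sphere 0 1}" M "\<lambda>\<omega>. \<xi> s \<omega> \<in> sphere 0 1"] on_sphere[of s] by simp
  thus ?thesis by (simp add: measure_def)
qed

lemma prob_band:
  assumes "norm c = 1" "a \<ge> 0"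
  shows "prob {\<omega> \<in> space M. \<xi> s \<omega> \<notin> sphere 0 1 \<or> \<bar>c \<bullet> \<xi> s \<omega>\<bar> \<le> a} \<le> C' * (4 * measure lebesgue (cball (0::real^'d) 2) / measure lebesgue (ball (0::real^'d) 1)) * a"
proof -
  have ev1: "{\<omega> \<in> space M. \<xi> s \<omega> \<notin> sphere 0 1} \<in> events" by (rule sphere_ev)
  have ev2: "\<xi> s -` band c a \<inter> space M \<in> events" using rv[of s] band_borel by (rule measurable_sets)
  have "prob {\<omega> \<in> space M. \<xi> s \<omega> \<notin> sphere 0 1 \<or> \<bar>c \<bullet> \<xi> s \<omega>\<bar> \<le> a} \<le> prob ({\<omega> \<in> space M. \<xi> s \<omega> \<notin> sphere 0 1} \<union> (\<xi> s -` band c a \<inter> space M))"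
    using ev1 ev2 by (intro finite_measure_mono) (auto simp: band_def)
  also have "\<dots> \<le> prob {\<omega> \<in> space M. \<xi> s \<omega> \<notin> sphere 0 1} + prob (\<xi> s -` band c a \<inter> space M)"
    using ev1 ev2 by (rule measure_Un_le)
  also have "\<dots> \<le> C' * sphere_mu (band c a)"
  proof -
    have sub: "band c a \<subseteq> sphere 0 1" by (auto simp: band_def)
    show ?thesis using bounds[OF band_borel sub, of s] not_sphere_null[of s] by linarith
  qed
  also have "\<dots> \<le> C' * (4 * measure lebesgue (cball (0::real^'d) 2) / measure lebesgue (ball (0::real^'d) 1) * a)"
    using sphere_mu_band[OF assms] C'pos by (intro mult_left_mono) auto
  finally show ?thesis by (simp add: mult.assoc)
qed

lemma prob_cap:
  assumes "norm p = 1" "0 < \<delta>" "\<delta> \<le> 1"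
  shows "prob {\<omega> \<in> space M. \<xi> s \<omega> \<in> cap p \<delta>} \<ge> C * (measure lebesgue (ball (0::real^'d) (\<delta>/4)) / measure lebesgue (ball (0::real^'d) 1))"
proof -
  have "C * (measure lebesgue (ball (0::real^'d) (\<delta>/4)) / measure lebesgue (ball (0::real^'d) 1)) \<le> C * sphere_mu (cap p \<delta>)"
    using sphere_mu_cap[OF assms] Cpos by (intro mult_left_mono) auto
  also have "\<dots> \<le> prob (\<xi> s -` cap p \<delta> \<inter> space M)"
  proof -
    have sub: "cap p \<delta> \<subseteq> sphere 0 1" by (auto simp: cap_def)
    show ?thesis using bounds[OF cap_borel sub, of s] by linarith
  qed
  also have "\<xi> s -` cap p \<delta> \<inter> space M = {\<omega> \<in> space M. \<xi> s \<omega> \<in> cap p \<delta>}" by auto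
  finally show ?thesis .
qed

lemma CLp_le:
  fixes P :: "(nat \<Rightarrow> real^'d) \<Rightarrow> bool" and Q :: "(nat \<Rightarrow> real^'d) \<Rightarrow> real^'d \<Rightarrow> bool"
  assumes dP: "\<And>f. P f = P (restrict f {..<s})" and dQ: "\<And>f z. Q f z = Q (restrict f {..<s}) z"
    and Pm: "Measurable.pred (PS s) P"
    and Qm: "Measurable.pred (PS s \<Otimes>\<^sub>M PG s) (\<lambda>x. Q (fst x) (snd x s))"
    and b: "b \<ge> 0" and bnd: "\<And>h. h \<in> space (PS s) \<Longrightarrow> P h \<Longrightarrow> prob {\<omega> \<in> space M. Q h (\<xi> s \<omega>)} \<le> b"
  shows "prob {\<omega> \<in> space M. P (Xi \<omega>) \<and> Q (Xi \<omega>) (\<xi> s \<omega>)} \<le> b * prob {\<omega> \<in> space M. P (Xi \<omega>)}"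
proof -
  have e1: "{\<omega> \<in> space M. P (Xi \<omega>) \<and> Q (Xi \<omega>) (\<xi> s \<omega>)} = {\<omega> \<in> space M. P (H s \<omega>) \<and> Q (H s \<omega>) (\<xi> s \<omega>)}"
    using dP dQ by (simp add: H_Xi)
  have e2: "{\<omega> \<in> space M. P (Xi \<omega>)} = {\<omega> \<in> space M. P (H s \<omega>)}"
    using dP by (simp add: H_Xi)
  show ?thesis unfolding e1 e2 by (rule CL_le[OF Pm Qm b bnd])
qed

lemma CLp_ge:
  fixes P :: "(nat \<Rightarrow> real^'d) \<Rightarrow> bool" and Q :: "(nat \<Rightarrow> real^'d) \<Rightarrow> real^'d \<Rightarrow> bool"
  assumes dP: "\<And>f. P f = P (restrict f {..<s})" and dQ: "\<And>f z. Q f z = Q (restrict f {..<s}) z"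
    and Pm: "Measurable.pred (PS s) P"
    and Qm: "Measurable.pred (PS s \<Otimes>\<^sub>M PG s) (\<lambda>x. Q (fst x) (snd x s))"
    and b: "b \<ge> 0" and bnd: "\<And>h. h \<in> space (PS s) \<Longrightarrow> P h \<Longrightarrow> prob {\<omega> \<in> space M. Q h (\<xi> s \<omega>)} \<ge> b"
  shows "prob {\<omega> \<in> space M. P (Xi \<omega>) \<and> Q (Xi \<omega>) (\<xi> s \<omega>)} \<ge> b * prob {\<omega> \<in> space M. P (Xi \<omega>)}"
proof -
  have e1: "{\<omega> \<in> space M. P (Xi \<omega>) \<and> Q (Xi \<omega>) (\<xi> s \<omega>)} = {\<omega> \<in> space M. P (H s \<omega>) \<and> Q (H s \<omega>) (\<xi> s \<omega>)}"
    using dP dQ by (simp add: H_Xi)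
  have e2: "{\<omega> \<in> space M. P (Xi \<omega>)} = {\<omega> \<in> space M. P (H s \<omega>)}"
    using dP by (simp add: H_Xi)
  show ?thesis unfolding e1 e2 by (rule CL_ge[OF Pm Qm b bnd])
qed

lemma prob_band_ex: "\<exists>B\<ge>0. \<forall>s c a. norm c = 1 \<longrightarrow> a \<ge> 0 \<longrightarrow> prob {\<omega> \<in> space M. \<xi> s \<omega> \<notin> sphere 0 1 \<or> \<bar>c \<bullet> \<xi> s \<omega>\<bar> \<le> a} \<le> B * a"
  using prob_band C'pos V1_pos[of 1]
  by (intro exI[of _ "C' * (4 * measure lebesgue (cball (0::real^'d) 2) / measure lebesgue (ball (0::real^'d) 1))"]) auto

lemma prob_cap_ex: "0 < \<delta> \<Longrightarrow> \<delta> \<le> 1 \<Longrightarrow> \<exists>c>0. \<forall>s p. norm p = 1 \<longrightarrow> prob {\<omega> \<in> space M. \<xi> s \<omega> \<in> cap p \<delta>} \<ge> c"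
  using prob_cap Cpos V1_pos[of 1] V1_pos[of "\<delta>/4"]
  by (intro exI[of _ "C * (measure lebesgue (ball (0::real^'d) (\<delta>/4)) / measure lebesgue (ball (0::real^'d) 1))"]) auto

end


locale hj3 = hj2 M \<xi> \<eta> C C' X0 i0 for M :: "'w measure" and \<xi> :: "nat \<Rightarrow> 'w \<Rightarrow> real^'d" and \<eta> C C' X0 and i0 :: "'n::finite" +
  fixes B :: real
  assumes B0: "B \<ge> 0"
    and hB: "\<And>s c a. norm c = 1 \<Longrightarrow> a \<ge> 0 \<Longrightarrow> prob {\<omega> \<in> space M. \<xi> s \<omega> \<notin> sphere 0 1 \<or> \<bar>c \<bullet> \<xi> s \<omega>\<bar> \<le> a} \<le> B * a"
begin

lemma rv_meas[measurable]: "\<xi> t \<in> borel_measurable M" by (rule rv)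

definition kickp :: "nat \<Rightarrow> (nat \<Rightarrow> real^'d) \<Rightarrow> bool" where
  "kickp t f = (norm (f t) \<noteq> 1 \<or> \<bar>TR t f $ i0 \<bullet> f t\<bar> \<le> Sf i0 (TR t f))"

definition dep :: "nat \<Rightarrow> ((nat \<Rightarrow> real^'d) \<Rightarrow> bool) \<Rightarrow> bool" where
  "dep s P = (\<forall>f. P f = P (restrict f {..<s}))"

lemma TR_Suc: "TR (Suc t) f = stepv \<eta> (f t) (TR t f)"
  unfolding TR_def by (rule traj_Suc)

lemma no_kick_contract: "\<not> kickp t f \<Longrightarrow> Sf i0 (TR (Suc t) f) \<le> lam \<eta> * Sf i0 (TR t f)"
  unfolding TR_Suc kickp_def
  by (rule Sf_contract) (use TR_norm eta in auto)

lemma decay: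
  assumes "\<And>j. j < J \<Longrightarrow> \<not> (Sf i0 (TR (t + j) f) \<le> lam \<eta> ^ j * a \<and> kickp (t + j) f)"
    and "Sf i0 (TR t f) \<le> a"
  shows "Sf i0 (TR (t + J) f) \<le> lam \<eta> ^ J * a"
  using assms
proof (induction J)
  case 0 thus ?case by simp
next
  case (Suc J)
  hence IH: "Sf i0 (TR (t + J) f) \<le> lam \<eta> ^ J * a" by simp
  hence "\<not> kickp (t + J) f" using Suc.prems(1)[of J] by auto
  hence "Sf i0 (TR (Suc (t + J)) f) \<le> lam \<eta> * Sf i0 (TR (t + J) f)" by (rule no_kick_contract)
  also have "\<dots> \<le> lam \<eta> * (lam \<eta> ^ J * a)" using IH lam_pos[of \<eta>] by (intro mult_left_mono) auto
  finally show ?case by simp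
qed

lemma comp_meas: "i < s \<Longrightarrow> (\<lambda>f. f i) \<in> borel_measurable (PS s)"
  by (rule measurable_component_singleton) simp

lemma xi_Xi: "Xi \<omega> t = \<xi> t \<omega>" by (simp add: Xi_def)

lemma kick_bound:
  assumes dP: "dep t P" and Pm: "Measurable.pred (PS t) P"
    and Pa: "\<And>f. P f \<Longrightarrow> Sf i0 (TR t f) \<le> a" and a: "a \<ge> 0"
  shows "prob {\<omega> \<in> space M. P (Xi \<omega>) \<and> kickp t (Xi \<omega>)} \<le> B * a * prob {\<omega> \<in> space M. P (Xi \<omega>)}"
proof -
  define Q where "Q f z = (norm z \<noteq> 1 \<or> \<bar>TR t f $ i0 \<bullet> z\<bar> \<le> Sf i0 (TR t f))" for f and z :: "real^'d"
  have e: "kickp t (Xi \<omega>) = Q (Xi \<omega>) (\<xi> t \<omega>)" for \<omega> by (simp add: kickp_def Q_def xi_Xi)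
  have [measurable]: "TR t \<in> borel_measurable (PS t)" by (rule TR_meas) simp
  have "prob {\<omega> \<in> space M. P (Xi \<omega>) \<and> Q (Xi \<omega>) (\<xi> t \<omega>)} \<le> (B * a) * prob {\<omega> \<in> space M. P (Xi \<omega>)}"
  proof (rule CLp_le)
    show "P f = P (restrict f {..<t})" for f using dP by (simp add: dep_def)
    show "Q f z = Q (restrict f {..<t}) z" for f z by (simp add: Q_def TR_restrict)
    show "Measurable.pred (PS t) P" by (rule Pm)
    show "Measurable.pred (PS t \<Otimes>\<^sub>M PG t) (\<lambda>x. Q (fst x) (snd x t))"
    proof -
      have [measurable]: "(\<lambda>x. snd x t) \<in> borel_measurable (PS t \<Otimes>\<^sub>M PG t)"
        by (rule measurable_compose[OF measurable_snd measurable_component_singleton]) simp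
      show ?thesis unfolding Q_def by measurable
    qed
    show "B * a \<ge> 0" using B0 a by simp
    fix h assume h: "h \<in> space (PS t)" "P h"
    have "prob {\<omega> \<in> space M. Q h (\<xi> t \<omega>)} \<le> prob {\<omega> \<in> space M. \<xi> t \<omega> \<notin> sphere 0 1 \<or> \<bar>TR t h $ i0 \<bullet> \<xi> t \<omega>\<bar> \<le> a}"
    proof (rule finite_measure_mono)
      show "{\<omega> \<in> space M. Q h (\<xi> t \<omega>)} \<subseteq> {\<omega> \<in> space M. \<xi> t \<omega> \<notin> sphere 0 1 \<or> \<bar>TR t h $ i0 \<bullet> \<xi> t \<omega>\<bar> \<le> a}"
        using Pa[OF h(2)] by (auto simp: Q_def)
      have "{\<omega> \<in> space M. \<xi> t \<omega> \<notin> sphere 0 1 \<or> \<bar>TR t h $ i0 \<bullet> \<xi> t \<omega>\<bar> \<le> a} = {\<omega> \<in> space M. norm (\<xi> t \<omega>) \<noteq> 1 \<or> \<bar>TR t h $ i0 \<bullet> \<xi> t \<omega>\<bar> \<le> a}" by auto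
      also have "\<dots> \<in> events" by measurable
      finally show "{\<omega> \<in> space M. \<xi> t \<omega> \<notin> sphere 0 1 \<or> \<bar>TR t h $ i0 \<bullet> \<xi> t \<omega>\<bar> \<le> a} \<in> events" .
    qed
    also have "\<dots> \<le> B * a" by (rule hB[OF TR_norm a])
    finally show "prob {\<omega> \<in> space M. Q h (\<xi> t \<omega>)} \<le> B * a" .
  qed
  thus ?thesis unfolding e .
qed

lemma TRXi_meas[measurable]: "(\<lambda>\<omega>. TR n (Xi \<omega>)) \<in> borel_measurable M"
proof -
  have "(\<lambda>\<omega>. TR n (Xi \<omega>)) = TR n \<circ> H n" by (rule ext) (simp add: H_Xi TR_restrict)
  also have "\<dots> \<in> borel_measurable M" by (rule measurable_comp[OF H_meas TR_meas]) simp
  finally show ?thesis .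
qed

definition conv :: "(nat \<Rightarrow> real^'d) \<Rightarrow> bool" where
  "conv f = ((\<lambda>n. Sf i0 (TR n f)) \<longlonglongrightarrow> 0)"

definition Ej :: "nat \<Rightarrow> real \<Rightarrow> nat \<Rightarrow> 'w set" where
  "Ej t a j = {\<omega> \<in> space M. Sf i0 (TR (t + j) (Xi \<omega>)) \<le> lam \<eta> ^ j * a \<and> kickp (t + j) (Xi \<omega>)}"

definition WU :: "nat \<Rightarrow> real \<Rightarrow> 'w set" where
  "WU t a = (\<Union>j. Ej t a j)"

lemma Xi_t_meas[measurable]: "(\<lambda>\<omega>. Xi \<omega> t) \<in> borel_measurable M"
  unfolding xi_Xi by (rule rv)

lemma Ej_ev: "Ej t a j \<in> events"
  unfolding Ej_def kickp_def by measurable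

lemma WU_ev: "WU t a \<in> events"
  unfolding WU_def using Ej_ev by blast

lemma Ej_prob:
  assumes "a \<ge> 0"
  shows "prob (Ej t a j) \<le> B * (lam \<eta> ^ j * a)"
proof -
  have [measurable]: "TR (t + j) \<in> borel_measurable (PS (t + j))" by (rule TR_meas) simp
  have "prob (Ej t a j) \<le> B * (lam \<eta> ^ j * a) * prob {\<omega> \<in> space M. Sf i0 (TR (t + j) (Xi \<omega>)) \<le> lam \<eta> ^ j * a}"
    unfolding Ej_def
  proof (rule kick_bound)
    show "dep (t + j) (\<lambda>f. Sf i0 (TR (t + j) f) \<le> lam \<eta> ^ j * a)" by (simp add: dep_def TR_restrict)
    show "Measurable.pred (PS (t + j)) (\<lambda>f. Sf i0 (TR (t + j) f) \<le> lam \<eta> ^ j * a)" by measurable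
    show "lam \<eta> ^ j * a \<ge> 0" using assms lam_pos[of \<eta>] by simp
  qed simp
  also have "\<dots> \<le> B * (lam \<eta> ^ j * a) * 1"
    using B0 assms lam_pos[of \<eta>] by (intro mult_left_mono) simp_all
  finally show ?thesis by simp
qed

lemma tail_sub:
  assumes "a \<ge> 0"
  shows "{\<omega> \<in> space M. Sf i0 (TR t (Xi \<omega>)) \<le> a \<and> \<not> conv (Xi \<omega>)} \<subseteq> WU t a"
proof
  fix \<omega> assume w: "\<omega> \<in> {\<omega> \<in> space M. Sf i0 (TR t (Xi \<omega>)) \<le> a \<and> \<not> conv (Xi \<omega>)}"
  show "\<omega> \<in> WU t a"
  proof (rule ccontr)
    assume nw: "\<omega> \<notin> WU t a"
    have dec: "Sf i0 (TR (t + J) (Xi \<omega>)) \<le> lam \<eta> ^ J * a" for J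
      by (rule decay) (use nw w in \<open>auto simp: WU_def Ej_def\<close>)
    have "(\<lambda>J. lam \<eta> ^ J * a) \<longlonglongrightarrow> 0"
      using lam_pos[of \<eta>] lam_lt1[OF eta] by (intro tendsto_mult_left_zero LIMSEQ_power_zero) simp
    have "(\<lambda>J. Sf i0 (TR (J + t) (Xi \<omega>))) \<longlonglongrightarrow> 0"
    proof (rule tendsto_sandwich[where f="\<lambda>_. 0" and h="\<lambda>J. lam \<eta> ^ J * a"])
      show "\<forall>\<^sub>F n in sequentially. 0 \<le> Sf i0 (TR (n + t) (Xi \<omega>))" by (simp add: Sf_nonneg)
      show "\<forall>\<^sub>F n in sequentially. Sf i0 (TR (n + t) (Xi \<omega>)) \<le> lam \<eta> ^ n * a" using dec by (simp add: add.commute)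
    qed (use \<open>(\<lambda>J. lam \<eta> ^ J * a) \<longlonglongrightarrow> 0\<close> in auto)
    hence "conv (Xi \<omega>)" unfolding conv_def by (rule LIMSEQ_offset)
    thus False using w by simp
  qed
qed

lemma WU_prob:
  assumes "a \<ge> 0"
  shows "prob (WU t a) \<le> B * a / (1 - lam \<eta>)"
proof -
  have l: "lam \<eta> \<ge> 0" "lam \<eta> < 1" using lam_pos[of \<eta>] lam_lt1[OF eta] by auto
  have sg: "summable (\<lambda>j. B * a * lam \<eta> ^ j)" using l by (intro summable_mult summable_geometric) simp
  have sm: "summable (\<lambda>j. prob (Ej t a j))"
    by (rule summable_comparison_test[OF _ sg]) (use Ej_prob[OF assms] in \<open>auto simp: mult_ac\<close>)
  have "prob (WU t a) \<le> (\<Sum>j. prob (Ej t a j))"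
    unfolding WU_def by (rule finite_measure_subadditive_countably) (use Ej_ev sm in auto)
  also have "\<dots> \<le> (\<Sum>j. B * a * lam \<eta> ^ j)"
    by (rule suminf_le[OF _ sm sg]) (use Ej_prob[OF assms] in \<open>auto simp: mult_ac\<close>)
  also have "\<dots> = B * a * (1 / (1 - lam \<eta>))"
    using l by (simp add: suminf_mult suminf_geometric)
  finally show ?thesis by simp
qed

end


context hj3
begin

lemma dep_mono: "dep s P \<Longrightarrow> s \<le> s' \<Longrightarrow> dep s' P"
  unfolding dep_def
proof (intro allI)
  fix f :: "nat \<Rightarrow> real^'d" assume d: "\<forall>f. P f = P (restrict f {..<s})" and ss: "s \<le> s'"
  have "restrict (restrict f {..<s'}) {..<s} = restrict f {..<s}" using ss by (auto simp: restrict_def)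
  thus "P f = P (restrict f {..<s'})" using d by metis
qed

lemma pred_mono:
  assumes "dep s P" "Measurable.pred (PS s) P" "s \<le> s'"
  shows "Measurable.pred (PS s') P"
proof -
  have "Measurable.pred (PS s') (\<lambda>h. P (restrict h {..<s}))"
    using measurable_compose[OF measurable_restrict_subset assms(2)] assms(3) by auto
  moreover have "(\<lambda>h. P (restrict h {..<s})) = P" using assms(1) by (auto simp: dep_def)
  ultimately show ?thesis by simp
qed

lemma ev_dep:
  assumes "dep s P" "Measurable.pred (PS s) P"
  shows "{\<omega> \<in> space M. P (Xi \<omega>)} \<in> events"
proof -
  have "{\<omega> \<in> space M. P (Xi \<omega>)} = H s -` {h \<in> space (PS s). P h} \<inter> space M"
    using assms(1) measurable_space[OF H_meas] by (auto simp: dep_def H_Xi)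
  also have "\<dots> \<in> events" by (rule measurable_sets[OF H_meas]) (use assms(2) in \<open>simp add: Measurable.pred_def\<close>)
  finally show ?thesis .
qed

lemma step0:
  assumes dA: "dep b A" and mA: "Measurable.pred (PS b) A"
  shows "prob {\<omega> \<in> space M. A (Xi \<omega>) \<and> norm (Xi \<omega> b) = 1 \<and> (\<forall>j. TR b (Xi \<omega>) $ j \<bullet> Xi \<omega> b \<noteq> 0)} \<ge> prob {\<omega> \<in> space M. A (Xi \<omega>)}"
proof -
  define Q where "Q f z = (norm z = 1 \<and> (\<forall>j. TR b f $ j \<bullet> z \<noteq> 0))" for f and z :: "real^'d"
  have [measurable]: "TR b \<in> borel_measurable (PS b)" by (rule TR_meas) simp
  have "prob {\<omega> \<in> space M. A (Xi \<omega>) \<and> Q (Xi \<omega>) (\<xi> b \<omega>)} \<ge> 1 * prob {\<omega> \<in> space M. A (Xi \<omega>)}"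
  proof (rule CLp_ge)
    show "A f = A (restrict f {..<b})" for f using dA by (simp add: dep_def)
    show "Q f z = Q (restrict f {..<b}) z" for f z by (simp add: Q_def TR_restrict)
    show "Measurable.pred (PS b) A" by (rule mA)
    show "Measurable.pred (PS b \<Otimes>\<^sub>M PG b) (\<lambda>x. Q (fst x) (snd x b))"
    proof -
      have [measurable]: "(\<lambda>x. snd x b) \<in> borel_measurable (PS b \<Otimes>\<^sub>M PG b)"
        by (rule measurable_compose[OF measurable_snd measurable_component_singleton]) simp
      show ?thesis unfolding Q_def by measurable
    qed
    show "(1::real) \<ge> 0" by simp
    fix h assume h: "h \<in> space (PS b)" "A h"
    define N where "N = (\<Union>j. {\<omega> \<in> space M. \<xi> b \<omega> \<notin> sphere 0 1 \<or> \<bar>TR b h $ j \<bullet> \<xi> b \<omega>\<bar> \<le> 0})"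
    have Nj: "{\<omega> \<in> space M. \<xi> b \<omega> \<notin> sphere 0 1 \<or> \<bar>TR b h $ j \<bullet> \<xi> b \<omega>\<bar> \<le> 0} \<in> events" for j
    proof -
      have "{\<omega> \<in> space M. \<xi> b \<omega> \<notin> sphere 0 1 \<or> \<bar>TR b h $ j \<bullet> \<xi> b \<omega>\<bar> \<le> 0} = {\<omega> \<in> space M. norm (\<xi> b \<omega>) \<noteq> 1 \<or> \<bar>TR b h $ j \<bullet> \<xi> b \<omega>\<bar> \<le> 0}" by auto
      also have "\<dots> \<in> events" by measurable
      finally show ?thesis .
    qed
    have Nev: "N \<in> events" unfolding N_def using Nj by blast
    have "prob N \<le> (\<Sum>j\<in>UNIV. prob {\<omega> \<in> space M. \<xi> b \<omega> \<notin> sphere 0 1 \<or> \<bar>TR b h $ j \<bullet> \<xi> b \<omega>\<bar> \<le> 0})"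
      unfolding N_def by (rule finite_measure_subadditive_finite) (use Nj in auto)
    also have "\<dots> \<le> (\<Sum>j\<in>(UNIV::'n set). B * 0)"
      by (rule sum_mono) (rule hB[OF TR_norm], simp)
    finally have N0: "prob N \<le> 0" by simp
    have "{\<omega> \<in> space M. Q h (\<xi> b \<omega>)} = space M - N" by (auto simp: Q_def N_def)
    hence "prob {\<omega> \<in> space M. Q h (\<xi> b \<omega>)} = 1 - prob N" using prob_compl[OF Nev] by simp
    thus "prob {\<omega> \<in> space M. Q h (\<xi> b \<omega>)} \<ge> 1" using N0 by simp
  qed
  moreover have "{\<omega> \<in> space M. A (Xi \<omega>) \<and> Q (Xi \<omega>) (\<xi> b \<omega>)} = {\<omega> \<in> space M. A (Xi \<omega>) \<and> norm (Xi \<omega> b) = 1 \<and> (\<forall>j. TR b (Xi \<omega>) $ j \<bullet> Xi \<omega> b \<noteq> 0)}"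
    by (simp add: Q_def xi_Xi)
  ultimately show ?thesis by simp
qed

definition R0 :: "nat \<Rightarrow> ((nat \<Rightarrow> real^'d) \<Rightarrow> bool) \<Rightarrow> (nat \<Rightarrow> real^'d) \<Rightarrow> bool" where
  "R0 b A f = (A f \<and> norm (f b) = 1 \<and> (\<forall>j. TR b f $ j \<bullet> f b \<noteq> 0))"

primrec RR :: "real \<Rightarrow> nat \<Rightarrow> ((nat \<Rightarrow> real^'d) \<Rightarrow> bool) \<Rightarrow> nat \<Rightarrow> (nat \<Rightarrow> real^'d) \<Rightarrow> bool" where
  "RR \<delta> b A 0 f = R0 b A f"
| "RR \<delta> b A (Suc i) f = (RR \<delta> b A i f \<and> norm (f (b + Suc i)) = 1 \<and> norm (f (b + Suc i) - f b) < \<delta>)"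

lemma RR_dep: "dep b A \<Longrightarrow> dep (b + Suc i) (RR \<delta> b A i)"
proof (induction i)
  case 0
  show ?case unfolding dep_def
  proof
    fix f :: "nat \<Rightarrow> real^'d"
    have "A f = A (restrict f {..<b + Suc 0})" using dep_mono[OF 0] by (simp add: dep_def)
    thus "RR \<delta> b A 0 f = RR \<delta> b A 0 (restrict f {..<b + Suc 0})" by (simp add: R0_def TR_restrict)
  qed
next
  case (Suc i)
  show ?case unfolding dep_def
  proof
    fix f :: "nat \<Rightarrow> real^'d"
    have "RR \<delta> b A i f = RR \<delta> b A i (restrict f {..<b + Suc (Suc i)})"
      using dep_mono[OF Suc.IH[OF Suc.prems], of "b + Suc (Suc i)"] by (simp add: dep_def)
    thus "RR \<delta> b A (Suc i) f = RR \<delta> b A (Suc i) (restrict f {..<b + Suc (Suc i)})" by simp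
  qed
qed

lemma RR_meas:
  assumes dA: "dep b A" and mA: "Measurable.pred (PS b) A"
  shows "Measurable.pred (PS (b + Suc i)) (RR \<delta> b A i)"
proof (induction i)
  case 0
  have [measurable]: "Measurable.pred (PS (b + Suc 0)) A" by (rule pred_mono[OF dA mA]) simp
  have [measurable]: "TR b \<in> borel_measurable (PS (b + Suc 0))" by (rule TR_meas) simp
  have [measurable]: "(\<lambda>f. f b) \<in> borel_measurable (PS (b + Suc 0))" by (rule comp_meas) simp
  show ?case unfolding RR.simps R0_def by measurable
next
  case (Suc i)
  have [measurable]: "Measurable.pred (PS (b + Suc (Suc i))) (RR \<delta> b A i)"
    by (rule pred_mono[OF RR_dep[OF dA] Suc.IH]) simp
  have [measurable]: "(\<lambda>f. f b) \<in> borel_measurable (PS (b + Suc (Suc i)))" by (rule comp_meas) simp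
  have [measurable]: "(\<lambda>f. f (b + Suc i)) \<in> borel_measurable (PS (b + Suc (Suc i)))" by (rule comp_meas) simp
  show ?case unfolding RR.simps by measurable
qed

lemma RR_prob:
  assumes dA: "dep b A" and mA: "Measurable.pred (PS b) A"
    and c: "c \<ge> 0" and hc: "\<And>s p. norm p = 1 \<Longrightarrow> prob {\<omega> \<in> space M. \<xi> s \<omega> \<in> cap p \<delta>} \<ge> c"
  shows "prob {\<omega> \<in> space M. RR \<delta> b A K (Xi \<omega>)} \<ge> c ^ K * prob {\<omega> \<in> space M. A (Xi \<omega>)}"
proof (induction K)
  case 0
  show ?case using step0[OF dA mA] by (simp add: R0_def)
next
  case (Suc K)
  define Q where "Q f z = (norm z = 1 \<and> norm (z - f b) < \<delta>)" for f and z :: "real^'d"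
  have "prob {\<omega> \<in> space M. RR \<delta> b A K (Xi \<omega>) \<and> Q (Xi \<omega>) (\<xi> (b + Suc K) \<omega>)} \<ge> c * prob {\<omega> \<in> space M. RR \<delta> b A K (Xi \<omega>)}"
  proof (rule CLp_ge)
    show "RR \<delta> b A K f = RR \<delta> b A K (restrict f {..<b + Suc K})" for f using RR_dep[OF dA] by (simp add: dep_def)
    show "Q f z = Q (restrict f {..<b + Suc K}) z" for f z by (simp add: Q_def)
    show "Measurable.pred (PS (b + Suc K)) (RR \<delta> b A K)" by (rule RR_meas[OF dA mA])
    show "Measurable.pred (PS (b + Suc K) \<Otimes>\<^sub>M PG (b + Suc K)) (\<lambda>x. Q (fst x) (snd x (b + Suc K)))"
    proof -
      have [measurable]: "(\<lambda>x. snd x (b + Suc K)) \<in> borel_measurable (PS (b + Suc K) \<Otimes>\<^sub>M PG (b + Suc K))"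
        by (rule measurable_compose[OF measurable_snd measurable_component_singleton]) simp
      have [measurable]: "(\<lambda>x. fst x b) \<in> borel_measurable (PS (b + Suc K) \<Otimes>\<^sub>M PG (b + Suc K))"
        by (rule measurable_compose[OF measurable_fst measurable_component_singleton]) simp
      show ?thesis unfolding Q_def by measurable
    qed
    show "c \<ge> 0" by (rule c)
    fix h assume h: "h \<in> space (PS (b + Suc K))" "RR \<delta> b A K h"
    have hb: "norm (h b) = 1"
    proof -
      have "RR \<delta> b A k h \<Longrightarrow> norm (h b) = 1" for k by (induction k) (auto simp: R0_def)
      thus ?thesis using h(2) .
    qed
    have "c \<le> prob {\<omega> \<in> space M. \<xi> (b + Suc K) \<omega> \<in> cap (h b) \<delta>}" by (rule hc[OF hb])
    also have "{\<omega> \<in> space M. \<xi> (b + Suc K) \<omega> \<in> cap (h b) \<delta>} = {\<omega> \<in> space M. Q h (\<xi> (b + Suc K) \<omega>)}"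
      by (auto simp: Q_def cap_def)
    finally show "prob {\<omega> \<in> space M. Q h (\<xi> (b + Suc K) \<omega>)} \<ge> c" .
  qed
  moreover have "{\<omega> \<in> space M. RR \<delta> b A K (Xi \<omega>) \<and> Q (Xi \<omega>) (\<xi> (b + Suc K) \<omega>)} = {\<omega> \<in> space M. RR \<delta> b A (Suc K) (Xi \<omega>)}"
    by (simp add: Q_def xi_Xi)
  moreover have "c * (c ^ K * prob {\<omega> \<in> space M. A (Xi \<omega>)}) \<le> c * prob {\<omega> \<in> space M. RR \<delta> b A K (Xi \<omega>)}"
    using Suc.IH c by (intro mult_left_mono) auto
  ultimately show ?case by (simp add: mult.assoc)
qed

lemma RR_props:
  "RR \<delta> b A K f \<Longrightarrow> R0 b A f \<and> (\<forall>i. 1 \<le> i \<and> i \<le> K \<longrightarrow> norm (f (b + i)) = 1 \<and> norm (f (b + i) - f b) < \<delta>)"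
proof (induction K)
  case 0 thus ?case by simp
next
  case (Suc K)
  thus ?case by (auto simp: le_Suc_eq)
qed

lemma RR_reset:
  assumes "RR \<delta> b A K f" "\<delta> > 0" "\<delta> \<le> 1/2" "\<delta> / (1 - lam \<eta>) \<le> 1" "\<delta> \<le> \<eta> / (1 + \<eta>)"
  shows "Sf i0 (TR (b + Suc K) f) \<le> real CARD('n) * (2 * (lam \<eta> ^ K * 2 + \<delta> / (1 - lam \<eta>)))"
proof -
  have P: "R0 b A f" "\<And>i. 1 \<le> i \<Longrightarrow> i \<le> K \<Longrightarrow> norm (f (b + i)) = 1 \<and> norm (f (b + i) - f b) < \<delta>"
    using RR_props[OF assms(1)] by auto
  have "Sf i0 ((\<lambda>i. TR (b + i) f) (Suc K)) \<le> real CARD('n) * (2 * (lam \<eta> ^ K * 2 + \<delta> / (1 - lam \<eta>)))"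
  proof (rule config_reset[where z = "\<lambda>i. f (b + i)"])
    show "\<eta> > 0" by (rule eta)
    show "norm ((\<lambda>i. TR (b + i) f) 0 $ i) = 1" for i by (simp add: TR_norm)
    show "norm (f (b + 0)) = 1" "\<And>j. (\<lambda>i. TR (b + i) f) 0 $ j \<bullet> f (b + 0) \<noteq> 0" using P(1) by (auto simp: R0_def)
    show "\<And>i. 1 \<le> i \<Longrightarrow> i \<le> K \<Longrightarrow> norm (f (b + i)) = 1 \<and> norm (f (b + i) - f (b + 0)) < \<delta>" using P(2) by simp
    show "\<And>i. i \<le> K \<Longrightarrow> (\<lambda>i. TR (b + i) f) (Suc i) = stepv \<eta> (f (b + i)) ((\<lambda>i. TR (b + i) f) i)"
      by (simp add: TR_Suc[symmetric])
  qed (use assms in auto)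
  thus ?thesis by simp
qed

end


context hj3
begin

lemma geom_partial: "(\<Sum>j<J. lam \<eta> ^ j) \<le> 1 / (1 - lam \<eta>)"
proof -
  have l: "lam \<eta> \<ge> 0" "lam \<eta> < 1" using lam_pos[of \<eta>] lam_lt1[OF eta] by auto
  have "(\<Sum>j<J. lam \<eta> ^ j) \<le> (\<Sum>j. lam \<eta> ^ j)"
    by (rule sum_le_suminf) (use l in \<open>auto intro: summable_geometric\<close>)
  also have "\<dots> = 1 / (1 - lam \<eta>)" using l by (simp add: suminf_geometric)
  finally show ?thesis .
qed

lemma block:
  assumes dA: "dep b A" and mA: "Measurable.pred (PS b) A"
    and d: "\<delta> > 0" "\<delta> \<le> 1/2" "\<delta> / (1 - lam \<eta>) \<le> 1" "\<delta> \<le> \<eta> / (1 + \<eta>)"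
    and c: "c \<ge> 0" and hc: "\<And>s p. norm p = 1 \<Longrightarrow> prob {\<omega> \<in> space M. \<xi> s \<omega> \<in> cap p \<delta>} \<ge> c"
    and r: "r \<ge> 0" and hr1: "real CARD('n) * (2 * (lam \<eta> ^ K * 2 + \<delta> / (1 - lam \<eta>))) \<le> r"
    and hr2: "B * r / (1 - lam \<eta>) \<le> 1/2"
  shows "prob {\<omega> \<in> space M. A (Xi \<omega>) \<and> Sf i0 (TR (b + Suc K + J) (Xi \<omega>)) \<le> lam \<eta> ^ J * r} \<ge> c ^ K / 2 * prob {\<omega> \<in> space M. A (Xi \<omega>)}"
proof -
  define t0 where "t0 = b + Suc K"
  define RK where "RK = RR \<delta> b A K"
  have l: "lam \<eta> > 0" "lam \<eta> < 1" using lam_pos[of \<eta>] lam_lt1[OF eta] by auto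
  have dRK: "dep t0 RK" unfolding RK_def t0_def by (rule RR_dep[OF dA])
  have mRK: "Measurable.pred (PS t0) RK" unfolding RK_def t0_def by (rule RR_meas[OF dA mA])
  define Pj where "Pj j f = (RK f \<and> Sf i0 (TR (t0 + j) f) \<le> lam \<eta> ^ j * r)" for j f
  have dPj: "dep (t0 + j) (Pj j)" for j
    using dep_mono[OF dRK, of "t0 + j"] unfolding dep_def Pj_def by (simp add: TR_restrict)
  have mPj: "Measurable.pred (PS (t0 + j)) (Pj j)" for j
  proof -
    have [measurable]: "Measurable.pred (PS (t0 + j)) RK" by (rule pred_mono[OF dRK mRK]) simp
    have [measurable]: "TR (t0 + j) \<in> borel_measurable (PS (t0 + j))" by (rule TR_meas) simp
    show ?thesis unfolding Pj_def by measurable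
  qed
  define Bad where "Bad j = {\<omega> \<in> space M. Pj j (Xi \<omega>) \<and> kickp (t0 + j) (Xi \<omega>)}" for j
  define Good where "Good = {\<omega> \<in> space M. RK (Xi \<omega>) \<and> Sf i0 (TR (t0 + J) (Xi \<omega>)) \<le> lam \<eta> ^ J * r}"
  have evRK: "{\<omega> \<in> space M. RK (Xi \<omega>)} \<in> events" by (rule ev_dep[OF dRK mRK])
  have evBad: "Bad j \<in> events" for j
  proof -
    have "Bad j = {\<omega> \<in> space M. Pj j (Xi \<omega>)} \<inter> {\<omega> \<in> space M. kickp (t0 + j) (Xi \<omega>)}" by (auto simp: Bad_def)
    moreover have "{\<omega> \<in> space M. kickp (t0 + j) (Xi \<omega>)} \<in> events" unfolding kickp_def by measurable
    ultimately show ?thesis using ev_dep[OF dPj mPj] by auto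
  qed
  have evGood: "Good \<in> events"
  proof -
    have "Good = {\<omega> \<in> space M. RK (Xi \<omega>)} \<inter> {\<omega> \<in> space M. Sf i0 (TR (t0 + J) (Xi \<omega>)) \<le> lam \<eta> ^ J * r}" by (auto simp: Good_def)
    moreover have "{\<omega> \<in> space M. Sf i0 (TR (t0 + J) (Xi \<omega>)) \<le> lam \<eta> ^ J * r} \<in> events" by measurable
    ultimately show ?thesis using evRK by auto
  qed
  have pBad: "prob (Bad j) \<le> B * (lam \<eta> ^ j * r) * prob {\<omega> \<in> space M. RK (Xi \<omega>)}" for j
  proof -
    have "prob (Bad j) \<le> B * (lam \<eta> ^ j * r) * prob {\<omega> \<in> space M. Pj j (Xi \<omega>)}"
      unfolding Bad_def by (rule kick_bound[OF dPj mPj]) (use r l in \<open>auto simp: Pj_def\<close>)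
    also have "\<dots> \<le> B * (lam \<eta> ^ j * r) * prob {\<omega> \<in> space M. RK (Xi \<omega>)}"
      using B0 r l evRK by (intro mult_left_mono finite_measure_mono) (auto simp: Pj_def)
    finally show ?thesis .
  qed
  have sub: "{\<omega> \<in> space M. RK (Xi \<omega>)} \<subseteq> Good \<union> (\<Union>j\<in>{..<J}. Bad j)"
  proof
    fix \<omega> assume w: "\<omega> \<in> {\<omega> \<in> space M. RK (Xi \<omega>)}"
    show "\<omega> \<in> Good \<union> (\<Union>j\<in>{..<J}. Bad j)"
    proof (cases "\<exists>j<J. \<omega> \<in> Bad j")
      case True thus ?thesis by auto
    next
      case False
      have r0: "Sf i0 (TR t0 (Xi \<omega>)) \<le> r"
        using RR_reset[of \<delta> b A K "Xi \<omega>", OF _ d] w hr1 by (simp add: RK_def t0_def)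
      have "Sf i0 (TR (t0 + J) (Xi \<omega>)) \<le> lam \<eta> ^ J * r"
        by (rule decay[OF _ r0]) (use False w in \<open>auto simp: Bad_def Pj_def\<close>)
      thus ?thesis using w by (auto simp: Good_def)
    qed
  qed
  define P where "P = prob {\<omega> \<in> space M. RK (Xi \<omega>)}"
  have "P \<le> prob (Good \<union> (\<Union>j\<in>{..<J}. Bad j))"
    unfolding P_def by (rule finite_measure_mono[OF sub]) (use evGood evBad in auto)
  also have "\<dots> \<le> prob Good + prob (\<Union>j\<in>{..<J}. Bad j)"
    by (rule measure_Un_le) (use evGood evBad in auto)
  also have "prob (\<Union>j\<in>{..<J}. Bad j) \<le> (\<Sum>j<J. prob (Bad j))"
    by (rule finite_measure_subadditive_finite) (use evBad in auto)
  also have "\<dots> \<le> (\<Sum>j<J. B * r * P * lam \<eta> ^ j)"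
    by (rule sum_mono) (use pBad in \<open>simp add: P_def mult_ac\<close>)
  also have "\<dots> = B * r * P * (\<Sum>j<J. lam \<eta> ^ j)" by (simp add: sum_distrib_left)
  also have "\<dots> \<le> B * r * P * (1 / (1 - lam \<eta>))"
    using B0 r geom_partial by (intro mult_left_mono) (auto simp: P_def)
  also have "B * r * P * (1 / (1 - lam \<eta>)) = (B * r / (1 - lam \<eta>)) * P" by simp
  also have "\<dots> \<le> 1/2 * P" using hr2 by (intro mult_right_mono) (auto simp: P_def)
  finally have PG: "P / 2 \<le> prob Good" by simp
  have "c ^ K / 2 * prob {\<omega> \<in> space M. A (Xi \<omega>)} \<le> P / 2"
    using RR_prob[OF dA mA c hc, of K] by (simp add: P_def RK_def)
  also have "\<dots> \<le> prob Good" by (rule PG)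
  also have "\<dots> \<le> prob {\<omega> \<in> space M. A (Xi \<omega>) \<and> Sf i0 (TR (b + Suc K + J) (Xi \<omega>)) \<le> lam \<eta> ^ J * r}"
  proof (rule finite_measure_mono)
    show "Good \<subseteq> {\<omega> \<in> space M. A (Xi \<omega>) \<and> Sf i0 (TR (b + Suc K + J) (Xi \<omega>)) \<le> lam \<eta> ^ J * r}"
      using RR_props[of \<delta> b A K] by (auto simp: Good_def RK_def t0_def R0_def)
    have "{\<omega> \<in> space M. A (Xi \<omega>) \<and> Sf i0 (TR (b + Suc K + J) (Xi \<omega>)) \<le> lam \<eta> ^ J * r} = {\<omega> \<in> space M. A (Xi \<omega>)} \<inter> {\<omega> \<in> space M. Sf i0 (TR (b + Suc K + J) (Xi \<omega>)) \<le> lam \<eta> ^ J * r}" by auto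
    moreover have "{\<omega> \<in> space M. Sf i0 (TR (b + Suc K + J) (Xi \<omega>)) \<le> lam \<eta> ^ J * r} \<in> events" by measurable
    ultimately show "{\<omega> \<in> space M. A (Xi \<omega>) \<and> Sf i0 (TR (b + Suc K + J) (Xi \<omega>)) \<le> lam \<eta> ^ J * r} \<in> events"
      using ev_dep[OF dA mA] by auto
  qed
  finally show ?thesis .
qed

end


context hj3
begin

definition AA :: "nat \<Rightarrow> nat \<Rightarrow> real \<Rightarrow> (nat \<Rightarrow> real^'d) \<Rightarrow> bool" where
  "AA L k \<rho> f = (\<forall>k'<k. Sf i0 (TR (Suc k' * L) f) > \<rho>)"

lemma AA_dep: "dep (k * L) (AA L k \<rho>)"
  unfolding dep_def AA_def
proof (intro allI)
  fix f :: "nat \<Rightarrow> real^'d"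
  have "k' < k \<Longrightarrow> Suc k' * L \<le> k * L" for k' using mult_le_mono1[of "Suc k'" k L] by (simp only: Suc_le_eq)
  thus "(\<forall>k'<k. \<rho> < Sf i0 (TR (Suc k' * L) f)) = (\<forall>k'<k. \<rho> < Sf i0 (TR (Suc k' * L) (restrict f {..<k * L})))"
    by (auto simp: TR_restrict)
qed

lemma AA_meas: "Measurable.pred (PS (k * L)) (AA L k \<rho>)"
proof (induction k)
  case 0 thus ?case by (simp add: AA_def)
next
  case (Suc k)
  have e: "AA L (Suc k) \<rho> = (\<lambda>f. AA L k \<rho> f \<and> Sf i0 (TR (Suc k * L) f) > \<rho>)"
    by (auto simp: AA_def less_Suc_eq fun_eq_iff)
  have [measurable]: "Measurable.pred (PS (Suc k * L)) (AA L k \<rho>)"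
    by (rule pred_mono[OF AA_dep Suc.IH]) simp
  have [measurable]: "TR (Suc k * L) \<in> borel_measurable (PS (Suc k * L))" by (rule TR_meas) simp
  show ?case unfolding e by measurable
qed

lemma AA_ev: "{\<omega> \<in> space M. AA L k \<rho> (Xi \<omega>)} \<in> events"
  by (rule ev_dep[OF AA_dep AA_meas])

lemma main_eps:
  assumes d: "\<delta> > 0" "\<delta> \<le> 1/2" "\<delta> / (1 - lam \<eta>) \<le> 1" "\<delta> \<le> \<eta> / (1 + \<eta>)"
    and c: "c > 0" and hc: "\<And>s p. norm p = 1 \<Longrightarrow> prob {\<omega> \<in> space M. \<xi> s \<omega> \<in> cap p \<delta>} \<ge> c"
    and r: "r \<ge> 0" and hr1: "real CARD('n) * (2 * (lam \<eta> ^ K * 2 + \<delta> / (1 - lam \<eta>))) \<le> r"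
    and hr2: "B * r / (1 - lam \<eta>) \<le> 1/2"
    and e: "\<epsilon> > 0"
  shows "\<exists>N \<in> events. {\<omega> \<in> space M. \<not> conv (Xi \<omega>)} \<subseteq> N \<and> prob N \<le> \<epsilon>"
proof -
  have l: "lam \<eta> > 0" "lam \<eta> < 1" using lam_pos[of \<eta>] lam_lt1[OF eta] by auto
  define q where "q = c ^ K / 2"
  have c1: "c \<le> 1"
  proof -
    obtain i :: 'd where True by simp
    have "c \<le> prob {\<omega> \<in> space M. \<xi> 0 \<omega> \<in> cap (axis i 1) \<delta>}" by (rule hc) simp
    also have "\<dots> \<le> 1" by simp
    finally show ?thesis .
  qed
  have q: "q > 0" "q \<le> 1" using c c1 power_le_one[of c K] by (auto simp: q_def)
  obtain m where m: "(1 - q) ^ m < \<epsilon> / 2" using real_arch_pow_inv[of "\<epsilon>/2" "1 - q"] e q by auto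
  define Z where "Z = real m * B * r / (1 - lam \<eta>) + 1"
  have "real m * B * r / (1 - lam \<eta>) \<ge> 0" using B0 r l by (intro divide_nonneg_nonneg mult_nonneg_nonneg) auto
  hence Z: "Z > 0" by (simp add: Z_def)
  obtain J where J: "lam \<eta> ^ J < \<epsilon> / 2 / Z" using real_arch_pow_inv[of "\<epsilon>/2/Z" "lam \<eta>"] e Z l by auto
  define L where "L = Suc K + J"
  define \<rho> where "\<rho> = lam \<eta> ^ J * r"
  have \<rho>0: "\<rho> \<ge> 0" using l r by (simp add: \<rho>_def)
  have stepA: "prob {\<omega> \<in> space M. AA L (Suc k) \<rho> (Xi \<omega>)} \<le> (1 - q) * prob {\<omega> \<in> space M. AA L k \<rho> (Xi \<omega>)}" for k
  proof -
    define S where "S = {\<omega> \<in> space M. AA L k \<rho> (Xi \<omega>) \<and> Sf i0 (TR (k * L + Suc K + J) (Xi \<omega>)) \<le> lam \<eta> ^ J * r}"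
    have Sev: "S \<in> events"
    proof -
      have "S = {\<omega> \<in> space M. AA L k \<rho> (Xi \<omega>)} \<inter> {\<omega> \<in> space M. Sf i0 (TR (k * L + Suc K + J) (Xi \<omega>)) \<le> lam \<eta> ^ J * r}" by (auto simp: S_def)
      moreover have "{\<omega> \<in> space M. Sf i0 (TR (k * L + Suc K + J) (Xi \<omega>)) \<le> lam \<eta> ^ J * r} \<in> events" by measurable
      ultimately show ?thesis using AA_ev by auto
    qed
    have bl: "prob S \<ge> c ^ K / 2 * prob {\<omega> \<in> space M. AA L k \<rho> (Xi \<omega>)}"
      unfolding S_def by (rule block[OF AA_dep AA_meas d _ hc r hr1 hr2]) (use c in simp)
    have eq: "{\<omega> \<in> space M. AA L (Suc k) \<rho> (Xi \<omega>)} = {\<omega> \<in> space M. AA L k \<rho> (Xi \<omega>)} - S"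
      by (auto simp: S_def AA_def \<rho>_def L_def less_Suc_eq algebra_simps)
    have "prob {\<omega> \<in> space M. AA L (Suc k) \<rho> (Xi \<omega>)} = prob {\<omega> \<in> space M. AA L k \<rho> (Xi \<omega>)} - prob S"
      unfolding eq by (rule finite_measure_Diff[OF AA_ev Sev]) (auto simp: S_def)
    thus ?thesis using bl by (simp add: q_def algebra_simps)
  qed
  have pA: "prob {\<omega> \<in> space M. AA L k \<rho> (Xi \<omega>)} \<le> (1 - q) ^ k" for k
  proof (induction k)
    case 0 thus ?case by (simp add: AA_def)
  next
    case (Suc k)
    have "prob {\<omega> \<in> space M. AA L (Suc k) \<rho> (Xi \<omega>)} \<le> (1 - q) * prob {\<omega> \<in> space M. AA L k \<rho> (Xi \<omega>)}" by (rule stepA)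
    also have "\<dots> \<le> (1 - q) * (1 - q) ^ k" using Suc.IH q by (intro mult_left_mono) auto
    finally show ?case by simp
  qed
  define N where "N = {\<omega> \<in> space M. AA L m \<rho> (Xi \<omega>)} \<union> (\<Union>k\<in>{..<m}. WU (Suc k * L) \<rho>)"
  have Nev: "N \<in> events" unfolding N_def using AA_ev WU_ev by auto
  have sub: "{\<omega> \<in> space M. \<not> conv (Xi \<omega>)} \<subseteq> N"
  proof
    fix \<omega> assume w: "\<omega> \<in> {\<omega> \<in> space M. \<not> conv (Xi \<omega>)}"
    show "\<omega> \<in> N"
    proof (cases "AA L m \<rho> (Xi \<omega>)")
      case True thus ?thesis using w by (auto simp: N_def)
    next
      case False
      then obtain k where k: "k < m" "Sf i0 (TR (Suc k * L) (Xi \<omega>)) \<le> \<rho>" by (auto simp: AA_def not_less)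
      hence "\<omega> \<in> WU (Suc k * L) \<rho>" using tail_sub[OF \<rho>0, of "Suc k * L"] w by auto
      thus ?thesis using k by (auto simp: N_def)
    qed
  qed
  have "prob N \<le> prob {\<omega> \<in> space M. AA L m \<rho> (Xi \<omega>)} + prob (\<Union>k\<in>{..<m}. WU (Suc k * L) \<rho>)"
    unfolding N_def by (rule measure_Un_le) (use AA_ev WU_ev in auto)
  also have "prob (\<Union>k\<in>{..<m}. WU (Suc k * L) \<rho>) \<le> (\<Sum>k<m. prob (WU (Suc k * L) \<rho>))"
    by (rule finite_measure_subadditive_finite) (use WU_ev in auto)
  also have "\<dots> \<le> (\<Sum>k<m. B * \<rho> / (1 - lam \<eta>))" by (rule sum_mono) (rule WU_prob[OF \<rho>0])
  also have "\<dots> = real m * B * r / (1 - lam \<eta>) * lam \<eta> ^ J" by (simp add: \<rho>_def)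
  also have "\<dots> \<le> Z * lam \<eta> ^ J" using l by (intro mult_right_mono) (auto simp: Z_def)
  also have "\<dots> \<le> \<epsilon> / 2" using J Z by (simp add: field_simps)
  finally have "prob N \<le> prob {\<omega> \<in> space M. AA L m \<rho> (Xi \<omega>)} + \<epsilon> / 2" by simp
  also have "\<dots> \<le> \<epsilon>" using pA[of m] m by simp
  finally show ?thesis using Nev sub by blast
qed

end


context hj3
begin

lemma AE_conv_params:
  assumes d: "\<delta> > 0" "\<delta> \<le> 1/2" "\<delta> / (1 - lam \<eta>) \<le> 1" "\<delta> \<le> \<eta> / (1 + \<eta>)"
    and c: "c > 0" and hc: "\<And>s p. norm p = 1 \<Longrightarrow> prob {\<omega> \<in> space M. \<xi> s \<omega> \<in> cap p \<delta>} \<ge> c"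
    and r: "r \<ge> 0" and hr1: "real CARD('n) * (2 * (lam \<eta> ^ K * 2 + \<delta> / (1 - lam \<eta>))) \<le> r"
    and hr2: "B * r / (1 - lam \<eta>) \<le> 1/2"
  shows "AE \<omega> in M. conv (Xi \<omega>)"
proof -
  have "\<forall>n. \<exists>N. N \<in> events \<and> {\<omega> \<in> space M. \<not> conv (Xi \<omega>)} \<subseteq> N \<and> prob N \<le> 1 / Suc n"
  proof
    fix n
    have "1 / real (Suc n) > 0" by simp
    from main_eps[OF d c hc r hr1 hr2 this] show "\<exists>N. N \<in> events \<and> {\<omega> \<in> space M. \<not> conv (Xi \<omega>)} \<subseteq> N \<and> prob N \<le> 1 / Suc n"
      by blast
  qed
  then obtain N where N: "\<And>n. N n \<in> events" "\<And>n. {\<omega> \<in> space M. \<not> conv (Xi \<omega>)} \<subseteq> N n" "\<And>n. prob (N n) \<le> 1 / Suc n"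
    by metis
  define NN where "NN = (\<Inter>n. N n)"
  have NNev: "NN \<in> events" unfolding NN_def using N(1) by auto
  have sub: "{\<omega> \<in> space M. \<not> conv (Xi \<omega>)} \<subseteq> NN" unfolding NN_def using N(2) by auto
  have "prob NN \<le> 0"
  proof (rule field_le_epsilon)
    fix e :: real assume e: "e > 0"
    obtain n where n: "inverse (real (Suc n)) < e" using reals_Archimedean[OF e] by blast
    have "prob NN \<le> prob (N n)" unfolding NN_def by (rule finite_measure_mono) (use N(1) in auto)
    also have "\<dots> \<le> 1 / Suc n" by (rule N(3))
    finally show "prob NN \<le> 0 + e" using n by (simp add: inverse_eq_divide)
  qed
  hence "emeasure M NN = 0" using NNev by (simp add: emeasure_eq_measure measure_nonneg antisym)
  thus ?thesis by (rule AE_I[OF sub _ NNev])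
qed

lemma AE_conv: "AE \<omega> in M. conv (Xi \<omega>)"
proof -
  have l: "lam \<eta> > 0" "lam \<eta> < 1" using lam_pos[of \<eta>] lam_lt1[OF eta] by auto
  define r where "r = (1 - lam \<eta>) / (2 * (B + 1))"
  have r0: "r > 0" using l B0 by (simp add: r_def)
  have hr2: "B * r / (1 - lam \<eta>) \<le> 1/2"
  proof -
    have "r / (1 - lam \<eta>) = 1 / (2 * (B + 1))" using l by (simp add: r_def)
    hence "B * r / (1 - lam \<eta>) = B / (2 * (B + 1))" by (metis times_divide_eq_right mult_1_right)
    also have "\<dots> \<le> 1/2" using B0 by (simp add: field_simps)
    finally show ?thesis .
  qed
  define n where "n = real CARD('n)"
  have n0: "n > 0" by (simp add: n_def)
  define \<delta> where "\<delta> = min (1/2) (min (1 - lam \<eta>) (min (\<eta> / (1 + \<eta>)) ((1 - lam \<eta>) * r / (4 * n))))"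
  have p1: "1 - lam \<eta> > 0" "\<eta> / (1 + \<eta>) > 0" "(1 - lam \<eta>) * r / (4 * n) > 0"
    using l r0 n0 eta by auto
  have d: "\<delta> > 0" "\<delta> \<le> 1/2" "\<delta> \<le> 1 - lam \<eta>" "\<delta> \<le> \<eta> / (1 + \<eta>)" "\<delta> \<le> (1 - lam \<eta>) * r / (4 * n)"
  proof -
    show "\<delta> > 0" unfolding \<delta>_def using p1 by simp
    show "\<delta> \<le> 1/2" unfolding \<delta>_def by (rule min.cobounded1)
    show "\<delta> \<le> 1 - lam \<eta>" unfolding \<delta>_def by (meson min.cobounded1 min.cobounded2 order_trans)
    show "\<delta> \<le> \<eta> / (1 + \<eta>)" unfolding \<delta>_def by (meson min.cobounded1 min.cobounded2 order_trans)
    show "\<delta> \<le> (1 - lam \<eta>) * r / (4 * n)" unfolding \<delta>_def by (meson min.cobounded1 min.cobounded2 order_trans)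
  qed
  have d3: "\<delta> / (1 - lam \<eta>) \<le> 1" using d(3) l by simp
  obtain K where K: "lam \<eta> ^ K < r / (8 * n)" using real_arch_pow_inv[of "r / (8 * n)" "lam \<eta>"] r0 n0 l by auto
  have hr1: "n * (2 * (lam \<eta> ^ K * 2 + \<delta> / (1 - lam \<eta>))) \<le> r"
  proof -
    have a: "n * (4 * lam \<eta> ^ K) \<le> r / 2" using K n0 by (simp add: field_simps)
    have "\<delta> / (1 - lam \<eta>) \<le> r / (4 * n)" using d(5) l n0 by (simp add: field_simps)
    hence b: "n * (2 * (\<delta> / (1 - lam \<eta>))) \<le> r / 2" using n0 by (simp add: field_simps)
    have "n * (2 * (lam \<eta> ^ K * 2 + \<delta> / (1 - lam \<eta>))) = n * (4 * lam \<eta> ^ K) + n * (2 * (\<delta> / (1 - lam \<eta>)))"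
      by (simp add: algebra_simps)
    thus ?thesis using a b by linarith
  qed
  obtain c where c: "c > 0" "\<And>s p. norm p = 1 \<Longrightarrow> prob {\<omega> \<in> space M. \<xi> s \<omega> \<in> cap p \<delta>} \<ge> c"
    using prob_cap_ex[of \<delta>] d by auto
  show ?thesis
    by (rule AE_conv_params[OF d(1,2) d3 d(4) c(1) c(2) _ hr1[unfolded n_def] hr2]) (use r0 in auto)
qed

end

theorem theorem3p2:
  fixes M :: "'w measure" and \<xi> :: "nat \<Rightarrow> 'w \<Rightarrow> real^'d"
    and \<eta> C C' :: real and X0 :: "real^'d^'n"
  assumes "prob_space M"
    and "\<eta> > 0"
    and rv: "\<And>t. \<xi> t \<in> borel_measurable M"
    and indep: "prob_space.indep_vars M (\<lambda>_. borel) \<xi> UNIV"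
    and ident: "\<And>t. distr M borel (\<xi> t) = distr M borel (\<xi> 0)"
    and on_sphere: "\<And>t. AE \<omega> in M. \<xi> t \<omega> \<in> sphere 0 1"
    and "C > 0" and "C' > 0"
    and bounds: "\<And>t A. A \<in> sets borel \<Longrightarrow> A \<subseteq> sphere 0 1 \<Longrightarrow>
        C * sphere_mu A \<le> measure M (\<xi> t -` A \<inter> space M) \<and>
        measure M (\<xi> t -` A \<inter> space M) \<le> C' * sphere_mu A"
    and X0: "\<And>i. X0 $ i \<in> sphere 0 1"
  shows "AE \<omega> in M.
    ((\<lambda>t. infdist (hjmr_traj \<eta> X0 (\<lambda>s. \<xi> s \<omega>) t) polarized) \<longlonglongrightarrow> 0)"
proof -
  obtain i0 :: 'n where True by simp
  have X0n: "\<And>i. norm (X0 $ i) = 1" using X0 by simp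
  interpret hj2 M \<xi> \<eta> C C' X0 i0
    by (intro hj2.intro hj.intro hj2_axioms.intro) (fact assms X0n)+
  obtain B where B: "B \<ge> 0" "\<And>s c a. norm c = 1 \<Longrightarrow> a \<ge> 0 \<Longrightarrow> prob {\<omega> \<in> space M. \<xi> s \<omega> \<notin> sphere 0 1 \<or> \<bar>c \<bullet> \<xi> s \<omega>\<bar> \<le> a} \<le> B * a"
    using prob_band_ex by blast
  interpret hj3 M \<xi> \<eta> C C' X0 i0 B
    by (intro hj3.intro hj3_axioms.intro hj2_axioms) (fact B)+
  show ?thesis
    using AE_conv
  proof (rule AE_mp, intro AE_I2 impI)
    fix \<omega> assume cv: "conv (Xi \<omega>)"
    show "(\<lambda>t. infdist (hjmr_traj \<eta> X0 (\<lambda>s. \<xi> s \<omega>) t) polarized) \<longlonglongrightarrow> 0"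
    proof (rule tendsto_sandwich[where f="\<lambda>_. 0" and h="\<lambda>t. Sf i0 (TR t (Xi \<omega>))"])
      show "\<forall>\<^sub>F t in sequentially. 0 \<le> infdist (hjmr_traj \<eta> X0 (\<lambda>s. \<xi> s \<omega>) t) polarized"
        by (simp add: infdist_nonneg)
      show "\<forall>\<^sub>F t in sequentially. infdist (hjmr_traj \<eta> X0 (\<lambda>s. \<xi> s \<omega>) t) polarized \<le> Sf i0 (TR t (Xi \<omega>))"
        using infdist_le_Sf[OF TR_norm] by (simp add: TR_def Xi_def)
      show "(\<lambda>t. Sf i0 (TR t (Xi \<omega>))) \<longlonglongrightarrow> 0" using cv by (simp add: conv_def)
    qed simp
  qed
qed


end
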